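(* Let $\beta>0$, $x\in(\lambda_t^-,\lambda^+)$ and $M>0$. (1) For every $\alpha\in\mathbb R$, the function $\lambda\mapsto\log\mathrm E_Y[e^{\alpha(\lambda-x)Y};\,|Y|\le M]$ is Lipschitz on every compact subset of $\mathbb R$. (2) $\psi_{x,M}(\alpha)$ is monotonically increasing in $M$, and $\lim_{M\to\infty}\psi_{x,M}(\alpha)=-\int\log(1+\alpha(x-\lambda))\,d\mu_\lambda$ if $\alpha\in[-\frac{1}{x-\lambda_t^-},\frac{1}{\lambda^+-x}]$ and $=+\infty$ otherwise. (3) $\psi_{x,M}$ and $\psi_{x,Y_M}$ are strictly convex on $\mathbb R$, and $\psi_x$ is strictly convex on $(-\frac{1}{x-\lambda_t^-},\frac{1}{\lambda^+-x})$. (4) For every $t<\bar\lambda-x$, if $M$ is large enough there exists $\alpha\in(-\infty,0)$ with $\psi'_{x,M}(\alpha)=\psi'_{x,Y_M}(\alpha)=t$; for every $t>\bar\lambda-x$, if $M$ is large enough there exists $\alpha\in(0,\infty)$ with $\psi'_{x,M}(\alpha)=\psi'_{x,Y_M}(\alpha)=t$.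
   Context: $Y$ has density $e^{-y}$ on $[0,\infty)$; $\mathrm E_Y[f(Y);\,A]=\mathrm E[f(Y)\mathbf 1_A]$. $Y_M$ has density $e^{-y}/\Pr(Y\le M)$ on $[0,M]$. Let $\lambda^\pm=(1\pm\sqrt\beta)^2$, $\mu_\lambda$ the probability measure $d\mu_\lambda=\Big((1-\tfrac1\beta)^+\delta(\lambda)+\frac{\sqrt{(\lambda-\lambda^-)^+(\lambda^+-\lambda)^+}}{2\pi\beta\lambda}\Big)d\lambda$, $\lambda_t^-=0$ if $\beta\ge1$ and $=\lambda^-$ if $\beta<1$, $\bar\lambda=\int\lambda\,d\mu_\lambda$. Define $\psi_{x,M}(\alpha)=\int\log\mathrm E_Y[e^{\alpha(\lambda-x)Y};\,|Y|\le M]\,d\mu_\lambda$, $\psi_{x,Y_M}(\alpha)=\int\log\mathrm E[e^{\alpha(\lambda-x)Y_M}]\,d\mu_\lambda$, and $\psi_x(\alpha)=\lim_{M\to\infty}\psi_{x,M}(\alpha)$. *)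

theory Defs
  imports "HOL-Probability.Probability"
begin

abbreviation Ydist :: "real measure" where
  "Ydist \<equiv> density lborel (exponential_density 1)"

definition EY :: "(real \<Rightarrow> real) \<Rightarrow> real set \<Rightarrow> real" where
  "EY f A = (\<integral>y. f y * indicator A y \<partial>Ydist)"

definition YMdist :: "real \<Rightarrow> real measure" where
  "YMdist M = density lborel
     (\<lambda>y. indicator {0..M} y * exp (- y) / measure Ydist {..M})"

definition lam_plus :: "real \<Rightarrow> real" where
  "lam_plus \<beta> = (1 + sqrt \<beta>)\<^sup>2"

definition lam_minus :: "real \<Rightarrow> real" where
  "lam_minus \<beta> = (1 - sqrt \<beta>)\<^sup>2"

definition lam_t_minus :: "real \<Rightarrow> real" where
  "lam_t_minus \<beta> = (if \<beta> \<ge> 1 then 0 else lam_minus \<beta>)"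

text \<open>Marchenko-Pastur law mu_lambda: atom of weight (1-1/beta)^+ at 0 plus the
  absolutely continuous part with density mp_density.\<close>
definition mp_atom :: "real \<Rightarrow> real" where
  "mp_atom \<beta> = max (1 - 1 / \<beta>) 0"

definition mp_density :: "real \<Rightarrow> real \<Rightarrow> real" where
  "mp_density \<beta> l =
     sqrt (max (l - lam_minus \<beta>) 0 * max (lam_plus \<beta> - l) 0) / (2 * pi * \<beta> * l)"

definition mp_int :: "real \<Rightarrow> (real \<Rightarrow> real) \<Rightarrow> real" where
  "mp_int \<beta> f = mp_atom \<beta> * f 0 + (\<integral>l. mp_density \<beta> l * f l \<partial>lborel)"

definition mp_eint :: "real \<Rightarrow> (real \<Rightarrow> ereal) \<Rightarrow> ereal" where
  "mp_eint \<beta> g =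
     ereal (mp_atom \<beta>) * g 0
     + enn2ereal (\<integral>\<^sup>+ l. ennreal (mp_density \<beta> l) * e2ennreal (max (g l) 0) \<partial>lborel)
     - enn2ereal (\<integral>\<^sup>+ l. ennreal (mp_density \<beta> l) * e2ennreal (max (- g l) 0) \<partial>lborel)"

definition lam_bar :: "real \<Rightarrow> real" where
  "lam_bar \<beta> = mp_int \<beta> (\<lambda>l. l)"

definition neglog :: "real \<Rightarrow> ereal" where
  "neglog u = (if u > 0 then ereal (- ln u) else \<infinity>)"

definition psiM :: "real \<Rightarrow> real \<Rightarrow> real \<Rightarrow> real \<Rightarrow> real" where
  "psiM \<beta> x M \<alpha> =
     mp_int \<beta> (\<lambda>l. ln (EY (\<lambda>y. exp (\<alpha> * (l - x) * y)) {y. \<bar>y\<bar> \<le> M}))"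

definition psiYM :: "real \<Rightarrow> real \<Rightarrow> real \<Rightarrow> real \<Rightarrow> real" where
  "psiYM \<beta> x M \<alpha> =
     mp_int \<beta> (\<lambda>l. ln (\<integral>y. exp (\<alpha> * (l - x) * y) \<partial>YMdist M))"

definition psi :: "real \<Rightarrow> real \<Rightarrow> real \<Rightarrow> real" where
  "psi \<beta> x \<alpha> = Lim at_top (\<lambda>M. psiM \<beta> x M \<alpha>)"

definition strictly_convex_on :: "real set \<Rightarrow> (real \<Rightarrow> real) \<Rightarrow> bool" where
  "strictly_convex_on S f \<longleftrightarrow> convex S \<and>
     (\<forall>a\<in>S. \<forall>b\<in>S. \<forall>u. a \<noteq> b \<and> 0 < u \<and> u < 1 \<longrightarrow>
        f ((1 - u) * a + u * b) < (1 - u) * f a + u * f b)"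

end

theory Submission
  imports Defs "HOL-Real_Asymp.Real_Asymp"
begin


lemma arc_deriv_R:
  fixes a b l :: real assumes "a < l" "l < b"
  shows "((\<lambda>l. sqrt((l-a)*(b-l))) has_real_derivative (a+b-2*l)/(2 * sqrt((l-a)*(b-l)))) (at l)"
proof -
  have p: "(l-a)*(b-l) > 0" using assms by simp
  have "((\<lambda>l. (l-a)*(b-l)) has_real_derivative (b-l) - (l-a)) (at l)"
    by (auto intro!: derivative_eq_intros)
  from DERIV_chain2[OF DERIV_real_sqrt[OF p] this]
  show ?thesis using p by (simp add: field_simps)
qed

lemma arc_deriv_v:
  fixes a b l :: real assumes "a < l" "l < b"
  shows "((\<lambda>l. arcsin ((2*l-(a+b))/(b-a))) has_real_derivative 1/sqrt((l-a)*(b-l))) (at l)"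
proof -
  let ?v = "(2*l-(a+b))/(b-a)"
  have ba: "b - a > 0" using assms by simp
  have p: "(l-a)*(b-l) > 0" using assms by simp
  have v1: "-1 < ?v" "?v < 1" using assms ba by (simp_all add: field_simps)
  have dv: "((\<lambda>l. (2*l-(a+b))/(b-a)) has_real_derivative 2/(b-a)) (at l)"
  proof -
    have "((\<lambda>l. 2*l-(a+b)) has_real_derivative 2) (at l)"
      by (auto intro!: derivative_eq_intros)
    from DERIV_cdivide[OF this, of "b-a"] show ?thesis .
  qed
  have e1: "1 - ?v^2 = (2 * sqrt((l-a)*(b-l))/(b-a))^2"
  proof -
    have d: "(b-a)^2 \<noteq> 0" using ba by simp
    have "1 - ?v^2 = 1 - (2*l-(a+b))^2/(b-a)^2" by (simp add: power_divide)
    also have "... = ((b-a)^2 - (2*l-(a+b))^2)/(b-a)^2"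
      using d by (simp add: field_simps)
    also have "(b-a)^2 - (2*l-(a+b))^2 = 4*((l-a)*(b-l))" by (simp add: algebra_simps power2_eq_square)
    also have "4*((l-a)*(b-l)) = (2 * sqrt((l-a)*(b-l)))^2" using p by (simp add: power_mult_distrib)
    finally show ?thesis by (simp add: power_divide)
  qed
  have e2: "sqrt (1 - ?v^2) = 2 * sqrt((l-a)*(b-l))/(b-a)"
    unfolding e1 using ba p by simp
  have key: "\<And>w d::real. w > 0 \<Longrightarrow> d > 0 \<Longrightarrow> inverse(2*w/d)*(2/d) = 1/w"
    by (simp add: field_simps)
  show ?thesis
    by (rule DERIV_cong[OF DERIV_chain2[OF DERIV_arcsin[OF v1] dv]])
       (unfold e2, rule key, use ba p in auto)
qed

lemma arc_deriv_u:
  fixes a b l :: real assumes "0 \<le> a" "a < l" "l < b"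
  shows "((\<lambda>l. sqrt(a*b) * arcsin (((a+b)*l - 2*a*b)/(l*(b-a)))) has_real_derivative
           a*b/(l * sqrt((l-a)*(b-l)))) (at l)"
proof (cases "a = 0")
  case True
  then show ?thesis by simp
next
  case False
  then have a0: "a > 0" using assms by simp
  let ?u = "((a+b)*l - 2*a*b)/(l*(b-a))"
  have ba: "b - a > 0" using assms by simp
  have l0: "l > 0" using assms by simp
  have b0: "b > 0" using assms by simp
  have p: "(l-a)*(b-l) > 0" using assms by simp
  have neg: "2*a*(l-b) < 0" using a0 assms by (simp add: mult_pos_neg)
  have u1: "-1 < ?u" "?u < 1"
  proof -
    have "(a+b)*l - 2*a*b + l*(b-a) = 2*b*(l-a)" by (simp add: algebra_simps)
    moreover have "2*b*(l-a) > 0" using b0 assms by simp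
    ultimately have "-(l*(b-a)) < (a+b)*l - 2*a*b" by linarith
    then show "-1 < ?u" using l0 ba by (simp add: field_simps)
    have "(a+b)*l - 2*a*b - l*(b-a) = 2*a*(l-b)" by (simp add: algebra_simps)
    then have "(a+b)*l - 2*a*b < l*(b-a)" using neg by linarith
    then show "?u < 1" using l0 ba by (simp add: field_simps)
  qed
  have du: "((\<lambda>l. ((a+b)*l - 2*a*b)/(l*(b-a))) has_real_derivative 2*a*b/(l^2*(b-a))) (at l)"
  proof -
    have d1: "((\<lambda>l. (a+b)*l - 2*a*b) has_real_derivative (a+b)) (at l)"
      by (auto intro!: derivative_eq_intros)
    have d2: "((\<lambda>l. l*(b-a)) has_real_derivative (b-a)) (at l)"
      by (auto intro!: derivative_eq_intros)
    have nz: "l*(b-a) \<noteq> 0" using l0 ba by simp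
    have "(a+b) * (l*(b-a)) - ((a+b)*l - 2*a*b) * (b-a) = 2*a*b*(b-a)" by (simp add: algebra_simps)
    then have "((a+b) * (l*(b-a)) - ((a+b)*l - 2*a*b) * (b-a)) / (l*(b-a) * (l*(b-a))) = 2*a*b/(l^2*(b-a))"
      using nz l0 ba by (simp add: power2_eq_square)
    with DERIV_divide[OF d1 d2 nz] show ?thesis by simp
  qed
  have e1: "1 - ?u^2 = (2 * sqrt(a*b) * sqrt((l-a)*(b-l))/(l*(b-a)))^2"
  proof -
    have d: "(l*(b-a))^2 \<noteq> 0" using ba l0 by simp
    have "1 - ?u^2 = 1 - ((a+b)*l - 2*a*b)^2/(l*(b-a))^2" by (simp add: power_divide)
    also have "... = ((l*(b-a))^2 - ((a+b)*l - 2*a*b)^2)/(l*(b-a))^2"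
      using d by (simp add: field_simps)
    also have "(l*(b-a))^2 - ((a+b)*l - 2*a*b)^2 = 4*(a*b)*((l-a)*(b-l))" by (simp add: algebra_simps power2_eq_square)
    also have "4*(a*b)*((l-a)*(b-l)) = (2 * sqrt(a*b) * sqrt((l-a)*(b-l)))^2" using p a0 b0 by (simp add: power_mult_distrib)
    finally show ?thesis by (simp add: power_divide)
  qed
  have e2: "sqrt (1 - ?u^2) = 2 * sqrt(a*b) * sqrt((l-a)*(b-l))/(l*(b-a))"
    unfolding e1 using ba p l0 a0 b0 by simp
  have sab: "sqrt(a*b) > 0" using a0 b0 by simp
  have ss: "sqrt(a*b) * sqrt(a*b) = a*b" using a0 b0 by simp
  have key: "\<And>w d q. w > 0 \<Longrightarrow> d > 0 \<Longrightarrow> q > 0 \<Longrightarrow> l > 0 \<Longrightarrow>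
     q * (inverse(2*q*w/(l*d))*(2*a*b/(l^2*d))) = a*b/(l*w)"
    by (simp add: field_simps power2_eq_square)
  show ?thesis
    by (rule DERIV_cong[OF DERIV_cmult[OF DERIV_chain2[OF DERIV_arcsin[OF u1] du], of "sqrt(a*b)"]])
       (unfold e2, rule key, use ba p l0 sab in auto)
qed

lemma arc_integral:
  fixes a b :: real assumes a0: "0 \<le> a" and ab: "a < b"
  shows "((\<lambda>l. sqrt((l-a)*(b-l))/l) has_integral (pi*((a+b)/2 - sqrt(a*b)))) {a..b}"
proof -
  define F where "F l = sqrt((l-a)*(b-l)) + (a+b)/2 * arcsin((2*l-(a+b))/(b-a))
      - sqrt(a*b) * arcsin(((a+b)*l - 2*a*b)/(l*(b-a)))" for l
  have ba: "b - a > 0" using ab by simp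
  have deriv: "(F has_vector_derivative sqrt((l-a)*(b-l))/l) (at l)" if l: "l \<in> {a<..<b}" for l
  proof -
    have l1: "a < l" "l < b" using l by auto
    have p: "(l-a)*(b-l) > 0" using l1 by simp
    have l0: "l > 0" using l1 a0 by simp
    have d: "(F has_real_derivative (a+b-2*l)/(2 * sqrt((l-a)*(b-l))) + (a+b)/2 * (1/sqrt((l-a)*(b-l)))
       - a*b/(l * sqrt((l-a)*(b-l)))) (at l)"
      unfolding F_def[abs_def]
      by (intro DERIV_diff DERIV_add DERIV_cmult arc_deriv_R arc_deriv_v arc_deriv_u l1 a0)
    have key: "\<And>w. w > 0 \<Longrightarrow> w^2 = (l-a)*(b-l) \<Longrightarrow>
       (a+b-2*l)/(2 * w) + (a+b)/2 * (1/w) - a*b/(l * w) = w/l"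
    proof -
      fix w :: real assume w: "w > 0" "w^2 = (l-a)*(b-l)"
      have "(a+b-2*l)/(2 * w) + (a+b)/2 * (1/w) - a*b/(l * w) = ((a+b-2*l)*l + (a+b)*l - 2*a*b)/(2*l*w)"
        using w l0 by (simp add: field_simps)
      also have "(a+b-2*l)*l + (a+b)*l - 2*a*b = 2*((l-a)*(b-l))" by (simp add: algebra_simps)
      also have "... = 2*w^2" using w by simp
      finally show "(a+b-2*l)/(2 * w) + (a+b)/2 * (1/w) - a*b/(l * w) = w/l"
        using w l0 by (simp add: power2_eq_square)
    qed
    have "(a+b-2*l)/(2 * sqrt((l-a)*(b-l))) + (a+b)/2 * (1/sqrt((l-a)*(b-l)))
       - a*b/(l * sqrt((l-a)*(b-l))) = sqrt((l-a)*(b-l))/l"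
      using p by (intro key) auto
    with d show ?thesis by (simp add: has_real_derivative_iff_has_vector_derivative)
  qed
  have cont: "continuous_on {a..b} F"
  proof -
    have c1: "continuous_on {a..b} (\<lambda>l. sqrt((l-a)*(b-l)) + (a+b)/2 * arcsin((2*l-(a+b))/(b-a)))"
      using ba by (intro continuous_intros) (auto simp: field_simps)
    show ?thesis
    proof (cases "a = 0")
      case True
      have "F = (\<lambda>l. sqrt((l-a)*(b-l)) + (a+b)/2 * arcsin((2*l-(a+b))/(b-a)))"
        using True by (auto simp: F_def fun_eq_iff)
      with c1 show ?thesis by simp
    next
      case False
      then have a1: "a > 0" using a0 by simp
      have c2: "continuous_on {a..b} (\<lambda>l. arcsin(((a+b)*l - 2*a*b)/(l*(b-a))))"
      proof (intro continuous_intros ballI conjI)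
        fix l assume "l \<in> {a..b}"
        then have l1: "a \<le> l" "l \<le> b" by auto
        then have l0: "l > 0" using a1 by simp
        show "l*(b-a) \<noteq> 0" using l0 ba by simp
        have "(a+b)*l - 2*a*b + l*(b-a) = 2*b*(l-a)" by (simp add: algebra_simps)
        moreover have "2*b*(l-a) \<ge> 0" using l1 ab a1 by simp
        ultimately have "-(l*(b-a)) \<le> (a+b)*l - 2*a*b" by linarith
        then show "-1 \<le> ((a+b)*l - 2*a*b)/(l*(b-a))" using l0 ba by (simp add: field_simps)
        have "(a+b)*l - 2*a*b - l*(b-a) = 2*a*(l-b)" by (simp add: algebra_simps)
        moreover have "2*a*(l-b) \<le> 0" using a1 l1 by (simp add: mult_nonneg_nonpos)
        ultimately have "(a+b)*l - 2*a*b \<le> l*(b-a)" by linarith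
        then show "((a+b)*l - 2*a*b)/(l*(b-a)) \<le> 1" using l0 ba by (simp add: field_simps)
      qed
      show ?thesis unfolding F_def[abs_def] by (intro continuous_intros c1 c2)
    qed
  qed
  have Fb: "F b = (a+b)/2 * (pi/2) - sqrt(a*b) * (pi/2)"
  proof -
    have "(2*b-(a+b))/(b-a) = 1" using ba by simp
    moreover have "((a+b)*b - 2*a*b)/(b*(b-a)) = 1" using ba ab a0
      by (simp add: field_simps)
    ultimately show ?thesis by (simp add: F_def)
  qed
  have Fa: "F a = -((a+b)/2 * (pi/2)) + sqrt(a*b) * (pi/2)"
  proof (cases "a = 0")
    case True
    have "(2*a-(a+b))/(b-a) = -1" using ba by (simp add: field_simps)
    then show ?thesis using True by (simp add: F_def arcsin_minus)
  next
    case False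
    have "(2*a-(a+b))/(b-a) = -1" using ba by (simp add: field_simps)
    moreover have "((a+b)*a - 2*a*b)/(a*(b-a)) = -1" using ba False
      by (simp add: field_simps)
    ultimately show ?thesis by (simp add: F_def arcsin_minus)
  qed
  have "((\<lambda>l. sqrt((l-a)*(b-l))/l) has_integral (F b - F a)) {a..b}"
    by (rule fundamental_theorem_of_calculus_interior[OF less_imp_le[OF ab] cont deriv])
  moreover have "F b - F a = pi*((a+b)/2 - sqrt(a*b))" unfolding Fa Fb by (simp add: algebra_simps)
  ultimately show ?thesis by simp
qed


lemma lam_facts:
  assumes "\<beta> > 0"
  shows "lam_plus \<beta> = 1 + \<beta> + 2 * sqrt \<beta>" "lam_minus \<beta> = 1 + \<beta> - 2 * sqrt \<beta>"
    "0 \<le> lam_minus \<beta>" "lam_minus \<beta> < lam_plus \<beta>" "0 < lam_plus \<beta>"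
    "sqrt (lam_minus \<beta> * lam_plus \<beta>) = \<bar>1 - \<beta>\<bar>"
    "0 \<le> lam_t_minus \<beta>" "lam_t_minus \<beta> \<le> lam_minus \<beta>"
proof -
  have s: "sqrt \<beta> ^ 2 = \<beta>" using assms by simp
  have sp: "sqrt \<beta> > 0" using assms by simp
  show p: "lam_plus \<beta> = 1 + \<beta> + 2 * sqrt \<beta>" unfolding lam_plus_def
    using assms by (simp add: power2_eq_square algebra_simps)
  show m: "lam_minus \<beta> = 1 + \<beta> - 2 * sqrt \<beta>" unfolding lam_minus_def
    using assms by (simp add: power2_eq_square algebra_simps)
  show "0 \<le> lam_minus \<beta>" unfolding lam_minus_def by simp
  show "lam_minus \<beta> < lam_plus \<beta>" using p m sp by simp
  show "0 < lam_plus \<beta>" using p sp assms by linarith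
  have "lam_minus \<beta> * lam_plus \<beta> = ((1 - sqrt \<beta>) * (1 + sqrt \<beta>))^2"
    unfolding lam_minus_def lam_plus_def by (simp add: power_mult_distrib)
  also have "(1 - sqrt \<beta>) * (1 + sqrt \<beta>) = 1 - \<beta>" using s by (simp add: algebra_simps power2_eq_square)
  finally show "sqrt (lam_minus \<beta> * lam_plus \<beta>) = \<bar>1 - \<beta>\<bar>" by simp
  show "0 \<le> lam_t_minus \<beta>" unfolding lam_t_minus_def lam_minus_def by simp
  show "lam_t_minus \<beta> \<le> lam_minus \<beta>" unfolding lam_t_minus_def lam_minus_def by simp
qed

lemma lam_t_minus_le1: "\<beta> \<le> 1 \<Longrightarrow> lam_t_minus \<beta> = lam_minus \<beta>"
  unfolding lam_t_minus_def lam_minus_def by auto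

lemma mp_atom_pos: "\<beta> > 0 \<Longrightarrow> mp_atom \<beta> > 0 \<longleftrightarrow> \<beta> > 1"
  unfolding mp_atom_def by (auto simp: field_simps max_def)

lemma mp_atom_nonneg: "mp_atom \<beta> \<ge> 0" unfolding mp_atom_def by simp

lemma dens_zero:
  assumes "\<beta> > 0" "l \<le> lam_minus \<beta> \<or> lam_plus \<beta> \<le> l"
  shows "mp_density \<beta> l = 0"
  using assms unfolding mp_density_def by auto

lemma dens_nonneg:
  assumes "\<beta> > 0" shows "mp_density \<beta> l \<ge> 0"
proof (cases "l \<le> lam_minus \<beta>")
  case True then show ?thesis using dens_zero assms by simp
next
  case False
  then have "l > 0" using lam_facts(3)[OF assms] by linarith
  then show ?thesis using assms unfolding mp_density_def by simp
qed

lemma dens_pos: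
  assumes "\<beta> > 0" "lam_minus \<beta> < l" "l < lam_plus \<beta>"
  shows "mp_density \<beta> l > 0"
proof -
  have "l > 0" using lam_facts(3)[OF assms(1)] assms by linarith
  then show ?thesis using assms unfolding mp_density_def by simp
qed

lemma dens_eq:
  assumes "\<beta> > 0" "lam_minus \<beta> \<le> l" "l \<le> lam_plus \<beta>"
  shows "mp_density \<beta> l = sqrt((l - lam_minus \<beta>)*(lam_plus \<beta> - l))/l / (2*pi*\<beta>)"
  using assms unfolding mp_density_def by simp

lemma dens_meas[measurable]: "mp_density \<beta> \<in> borel_measurable borel"
  unfolding mp_density_def[abs_def] by measurable

lemma dens_has_integral:
  assumes "\<beta> > 0"
  shows "(mp_density \<beta> has_integral (min 1 \<beta> / \<beta>)) UNIV"
proof -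
  let ?a = "lam_minus \<beta>" and ?b = "lam_plus \<beta>"
  note lf = lam_facts[OF assms]
  have "((\<lambda>l. sqrt((l - ?a)*(?b - l))/l) has_integral (pi*((?a+?b)/2 - sqrt(?a*?b)))) {?a..?b}"
    by (rule arc_integral) (use lf in auto)
  also have "pi*((?a+?b)/2 - sqrt(?a*?b)) = 2*pi*min 1 \<beta>"
    using lf by (auto simp: min_def field_simps)
  finally have "((\<lambda>l. sqrt((l - ?a)*(?b - l))/l / (2*pi*\<beta>)) has_integral (2*pi*min 1 \<beta>/(2*pi*\<beta>))) {?a..?b}"
    by (rule has_integral_divide)
  then have "(mp_density \<beta> has_integral (min 1 \<beta>/\<beta>)) {?a..?b}"
    by (subst has_integral_cong[OF dens_eq[OF assms]]) auto
  then show ?thesis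
    by (rule has_integral_on_superset) (auto intro!: dens_zero assms)
qed

lemma dens_integrable:
  assumes "\<beta> > 0" shows "integrable lborel (mp_density \<beta>)"
proof -
  have "mp_density \<beta> absolutely_integrable_on UNIV"
    using dens_has_integral[OF assms] dens_nonneg[OF assms]
    by (intro nonnegative_absolutely_integrable_1) (auto simp: has_integral_integrable)
  then have "integrable lebesgue (mp_density \<beta>)" by (simp add: set_integrable_def)
  then show ?thesis by (simp add: integrable_completion)
qed

lemma dens_integral:
  assumes "\<beta> > 0" shows "(\<integral>l. mp_density \<beta> l \<partial>lborel) = min 1 \<beta> / \<beta>"
  using integral_lborel[OF dens_integrable[OF assms]] dens_has_integral[OF assms]
  by (simp add: integral_unique)

lemma mp_mass: assumes "\<beta> > 0" shows "mp_atom \<beta> + (\<integral>l. mp_density \<beta> l \<partial>lborel) = 1"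
  using assms unfolding dens_integral[OF assms] mp_atom_def by (auto simp: min_def max_def field_simps)


lemma integral_strict_lborel:
  fixes f g :: "real \<Rightarrow> real"
  assumes f: "integrable lborel f" and g: "integrable lborel g" and le: "\<And>x. f x \<le> g x"
    and pq: "p < q" and lt: "\<And>x. p < x \<Longrightarrow> x < q \<Longrightarrow> f x < g x"
  shows "integral\<^sup>L lborel f < integral\<^sup>L lborel g"
proof -
  have "integral\<^sup>L lborel f \<le> integral\<^sup>L lborel g" using f g le by (intro integral_mono) auto
  moreover have "integral\<^sup>L lborel f \<noteq> integral\<^sup>L lborel g"
  proof
    assume eq: "integral\<^sup>L lborel f = integral\<^sup>L lborel g"
    have i: "integrable lborel (\<lambda>x. g x - f x)" using f g by simp
    have "integral\<^sup>L lborel (\<lambda>x. g x - f x) = 0" using eq f g by simp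
    then have "AE x in lborel. g x - f x = 0"
      using integral_nonneg_eq_0_iff_AE[OF i] le by simp
    then have ae: "AE x in lborel. x \<notin> {p<..<q}"
      by eventually_elim (use lt in force)
    have "emeasure lborel {p<..<q} = 0"
      using ae by (subst (asm) AE_iff_measurable[of "{p<..<q}"]) auto
    then show False using pq by simp
  qed
  ultimately show ?thesis by simp
qed

lemma strict_convex_from_deriv:
  fixes f f' :: "real \<Rightarrow> real"
  assumes S: "convex S" and d: "\<And>z. z \<in> S \<Longrightarrow> (f has_real_derivative f' z) (at z)"
    and m: "\<And>z w. z \<in> S \<Longrightarrow> w \<in> S \<Longrightarrow> z < w \<Longrightarrow> f' z < f' w"
  shows "strictly_convex_on S f"
proof -
  have key: "f ((1 - u) * a + u * b) < (1 - u) * f a + u * f b"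
    if ab: "a \<in> S" "b \<in> S" "a < b" and u: "0 < u" "u < 1" for a b u
  proof -
    have seg: "t \<in> S" if "a \<le> t" "t \<le> b" for t
    proof -
      let ?s = "(t - a)/(b - a)"
      have s: "0 \<le> ?s" "?s \<le> 1" using that ab by (auto simp: field_simps)
      have "(1 - ?s) * a + ?s * b \<in> S"
        using convexD[OF S ab(1) ab(2), of "1 - ?s" ?s] s by simp
      also have "(1 - ?s) * a + ?s * b = a + ?s * (b - a)"
      proof -
        have "\<And>r::real. (1 - r) * a + r * b = a + r * (b - a)" by (simp add: algebra_simps)
        then show ?thesis .
      qed
      also have "?s * (b - a) = t - a" using ab by simp
      also have "a + (t - a) = t" by simp
      finally show ?thesis .
    qed
    define z where "z = (1 - u) * a + u * b"
    have za: "z - a = u * (b - a)" and bz: "b - z = (1 - u) * (b - a)" unfolding z_def by (simp_all add: algebra_simps)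
    have p1: "u * (b - a) > 0" using ab u by simp
    have p2: "(1 - u) * (b - a) > 0" using ab u by simp
    have az1: "a < z" using za p1 by linarith
    have az2: "z < b" using bz p2 by linarith
    note az = az1 az2
    obtain \<xi>1 where x1: "a < \<xi>1" "\<xi>1 < z" "f z - f a = (z - a) * f' \<xi>1"
      using MVT2[OF az(1), of f f'] d seg az by force
    obtain \<xi>2 where x2: "z < \<xi>2" "\<xi>2 < b" "f b - f z = (b - z) * f' \<xi>2"
      using MVT2[OF az(2), of f f'] d seg az by force
    have lt: "f' \<xi>1 < f' \<xi>2" using m seg x1 x2 az by auto
    have "(1 - u) * f a + u * f b - f z = u * (f b - f z) - (1 - u) * (f z - f a)"
      by (simp add: algebra_simps)
    also have "... = u * (1 - u) * (b - a) * (f' \<xi>2 - f' \<xi>1)"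
      unfolding x1(3) x2(3) za bz by (simp add: algebra_simps)
    also have "... > 0" using u ab lt by (intro mult_pos_pos) auto
    finally show ?thesis unfolding z_def by simp
  qed
  show ?thesis unfolding strictly_convex_on_def
  proof (intro conjI S ballI allI impI)
    fix a b u :: real assume a: "a \<in> S" and b: "b \<in> S" and h: "a \<noteq> b \<and> 0 < u \<and> u < 1"
    show "f ((1 - u) * a + u * b) < (1 - u) * f a + u * f b"
    proof (cases "a < b")
      case True then show ?thesis using key a b h by blast
    next
      case False
      then have "b < a" using h by simp
      from key[OF b a this, of "1 - u"] h show ?thesis by (simp add: algebra_simps)
    qed
  qed
qed

lemma exp_strict_convex: "strictly_convex_on UNIV exp"
  by (rule strict_convex_from_deriv[where f'=exp]) (auto intro: DERIV_exp)

lemma exp_convex_ineq: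
  fixes s t u :: real assumes "0 < u" "u < 1"
  shows "exp ((1 - u) * s + u * t) \<le> (1 - u) * exp s + u * exp t"
    and "s \<noteq> t \<Longrightarrow> exp ((1 - u) * s + u * t) < (1 - u) * exp s + u * exp t"
proof -
  show lt: "s \<noteq> t \<Longrightarrow> exp ((1 - u) * s + u * t) < (1 - u) * exp s + u * exp t"
    using exp_strict_convex assms unfolding strictly_convex_on_def by blast
  show "exp ((1 - u) * s + u * t) \<le> (1 - u) * exp s + u * exp t"
  proof (cases "s = t")
    case True then show ?thesis by (simp add: algebra_simps)
  next
    case False then show ?thesis using lt by simp
  qed
qed

lemma neg_ln_strict_convex: "strictly_convex_on {0<..} (\<lambda>z. - ln z)"
proof (rule strict_convex_from_deriv[where f'="\<lambda>z. - (1 / z)"])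
  show "convex {0::real<..}" by simp
  show "((\<lambda>z. - ln z) has_real_derivative - (1 / z)) (at z)" if "z \<in> {0<..}" for z
    using that by (auto intro!: derivative_eq_intros simp: field_simps)
  show "- (1 / z) < - (1 / w)" if "z \<in> {0<..}" "w \<in> {0<..}" "z < w" for z w :: real
    using that by (simp add: field_simps)
qed

definition Gf :: "real \<Rightarrow> real \<Rightarrow> real" where
  "Gf c M = integral {0..M} (\<lambda>y. exp ((c - 1) * y))"
definition Gd :: "real \<Rightarrow> real \<Rightarrow> real" where
  "Gd c M = integral {0..M} (\<lambda>y. y * exp ((c - 1) * y))"
definition Gdd :: "real \<Rightarrow> real \<Rightarrow> real" where
  "Gdd c M = integral {0..M} (\<lambda>y. y * (y * exp ((c - 1) * y)))"
definition mG :: "real \<Rightarrow> real \<Rightarrow> real" where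
  "mG c M = Gd c M / Gf c M"

lemma Gf_integrable: fixes c M :: real shows "integrable lborel (\<lambda>y. indicator {0..M} y * exp ((c - 1) * y))"
proof -
  have "set_integrable lborel {0..M} (\<lambda>y. exp ((c - 1) * y))"
    by (rule borel_integrable_atLeastAtMost') (auto intro!: continuous_intros)
  then show ?thesis by (simp add: set_integrable_def)
qed

lemma Gf_lborel: "(\<integral>y. indicator {0..M} y * exp ((c - 1) * y) \<partial>lborel) = Gf c M"
proof -
  have si: "set_integrable lborel {0..M} (\<lambda>y. exp ((c - 1) * y))"
    by (rule borel_integrable_atLeastAtMost') (auto intro!: continuous_intros)
  from set_borel_integral_eq_integral(2)[OF si]
  show ?thesis unfolding Gf_def set_lebesgue_integral_def by simp
qed

lemma expdens_meas[measurable]: "exponential_density 1 \<in> borel_measurable borel"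
  unfolding exponential_density_def[abs_def] by measurable

lemma EY_Gf: "EY (\<lambda>y. exp (c * y)) {y. \<bar>y\<bar> \<le> M} = Gf c M"
proof -
  have "EY (\<lambda>y. exp (c * y)) {y. \<bar>y\<bar> \<le> M} =
      (\<integral>y. exponential_density 1 y *\<^sub>R (exp (c * y) * indicator {y. \<bar>y\<bar> \<le> M} y) \<partial>lborel)"
    unfolding EY_def
    by (rule integral_density) (auto simp: exponential_density_def)
  also have "... = (\<integral>y. indicator {0..M} y * exp ((c - 1) * y) \<partial>lborel)"
  proof (rule Bochner_Integration.integral_cong[OF refl])
    fix y :: real
    have e: "exp (- y) * exp (c * y) = exp ((c - 1) * y)" by (simp add: mult_exp_exp algebra_simps)
    show "exponential_density 1 y *\<^sub>R (exp (c * y) * indicator {y. \<bar>y\<bar> \<le> M} y) =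
        indicator {0..M} y * exp ((c - 1) * y)"
      using e by (auto simp: exponential_density_def indicator_def)
  qed
  also have "... = Gf c M" by (rule Gf_lborel)
  finally show ?thesis .
qed

lemma Gf_closed:
  assumes "0 \<le> M"
  shows "Gf c M = (if c = 1 then M else (exp ((c - 1) * M) - 1) / (c - 1))"
proof (cases "c = 1")
  case True then show ?thesis using assms by (simp add: Gf_def)
next
  case False
  have "((\<lambda>y. exp ((c - 1) * y)) has_integral (exp ((c - 1) * M) / (c - 1) - exp ((c - 1) * 0) / (c - 1))) {0..M}"
  proof (rule fundamental_theorem_of_calculus[OF assms])
    fix y assume "y \<in> {0..M}"
    have "((\<lambda>y. exp ((c - 1) * y) / (c - 1)) has_real_derivative exp ((c - 1) * y)) (at y)"
      using False by (auto intro!: derivative_eq_intros)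
    then show "((\<lambda>y. exp ((c - 1) * y) / (c - 1)) has_vector_derivative exp ((c - 1) * y)) (at y within {0..M})"
      by (simp add: has_real_derivative_iff_has_vector_derivative has_vector_derivative_at_within)
  qed
  then show ?thesis using False unfolding Gf_def by (simp add: integral_unique diff_divide_distrib)
qed

lemma Gd_closed:
  assumes "0 \<le> M" "c \<noteq> 1"
  shows "Gd c M = (M / (c - 1) - 1 / (c - 1)^2) * exp ((c - 1) * M) + 1 / (c - 1)^2"
proof -
  let ?F = "\<lambda>y. (y / (c - 1) - 1 / (c - 1)^2) * exp ((c - 1) * y)"
  have "((\<lambda>y. y * exp ((c - 1) * y)) has_integral (?F M - ?F 0)) {0..M}"
  proof (rule fundamental_theorem_of_calculus[OF assms(1)])
    fix y assume "y \<in> {0..M}"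
    have "(?F has_real_derivative (1 / (c - 1)) * exp ((c - 1) * y) + (y / (c - 1) - 1 / (c - 1)^2) * (exp ((c - 1) * y) * (c - 1))) (at y)"
      using assms(2) by (auto intro!: derivative_eq_intros)
    moreover have "(1 / (c - 1)) * exp ((c - 1) * y) + (y / (c - 1) - 1 / (c - 1)^2) * (exp ((c - 1) * y) * (c - 1))
        = y * exp ((c - 1) * y)"
    proof -
      have aux: "\<And>d E::real. d \<noteq> 0 \<Longrightarrow> (1/d)*E + (y/d - 1/d^2)*(E*d) = y*E"
        by (simp add: field_simps power2_eq_square)
      show ?thesis using aux assms(2) by simp
    qed
    ultimately show "(?F has_vector_derivative y * exp ((c - 1) * y)) (at y within {0..M})"
      by (simp add: has_real_derivative_iff_has_vector_derivative has_vector_derivative_at_within)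
  qed
  then show ?thesis unfolding Gd_def by (simp add: integral_unique)
qed

lemma Gf_pos: assumes "0 < M" shows "Gf c M > 0"
proof (cases "c = 1")
  case True then show ?thesis using assms by (simp add: Gf_closed)
next
  case False
  show ?thesis
  proof (cases "c > 1")
    case True
    then have "exp ((c - 1) * M) > 1" using assms by simp
    then show ?thesis using True assms by (simp add: Gf_closed)
  next
    case c: False
    then have "c < 1" using False by simp
    then have "exp ((c - 1) * M) < 1" using assms by (simp add: mult_neg_pos)
    then show ?thesis using \<open>c < 1\<close> assms by (simp add: Gf_closed divide_neg_neg)
  qed
qed

lemma Gf_mono: assumes "0 \<le> M" "M \<le> M'" shows "Gf c M \<le> Gf c M'"
proof (cases "c = 1")
  case True then show ?thesis using assms by (simp add: Gf_closed)
next
  case False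
  have M': "0 \<le> M'" using assms by simp
  show ?thesis
  proof (cases "c > 1")
    case True
    then have "exp ((c - 1) * M) \<le> exp ((c - 1) * M')" using assms by simp
    then show ?thesis using True assms M' by (simp add: Gf_closed divide_right_mono)
  next
    case c: False
    then have c1: "c < 1" using False by simp
    then have "exp ((c - 1) * M') \<le> exp ((c - 1) * M)" using assms by (simp add: mult_left_mono_neg)
    then have "(exp ((c - 1) * M) - 1) / (c - 1) \<le> (exp ((c - 1) * M') - 1) / (c - 1)"
      using c1 by (intro divide_right_mono_neg) auto
    then show ?thesis using c1 assms M' by (simp add: Gf_closed)
  qed
qed

lemma Gf_lip: assumes "0 \<le> M" shows "Gf c2 M \<le> exp (\<bar>c2 - c1\<bar> * M) * Gf c1 M"
proof -
  have "Gf c2 M \<le> integral {0..M} (\<lambda>y. exp (\<bar>c2 - c1\<bar> * M) * exp ((c1 - 1) * y))"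
    unfolding Gf_def
  proof (rule integral_le)
    show "(\<lambda>y. exp ((c2 - 1) * y)) integrable_on {0..M}"
      by (intro integrable_continuous_interval continuous_intros)
    show "(\<lambda>y. exp (\<bar>c2 - c1\<bar> * M) * exp ((c1 - 1) * y)) integrable_on {0..M}"
      by (intro integrable_continuous_interval continuous_intros)
    fix y assume y: "y \<in> {0..M}"
    have "(c2 - c1) * y \<le> \<bar>c2 - c1\<bar> * M"
    proof -
      have "(c2 - c1) * y \<le> \<bar>c2 - c1\<bar> * y" using y by (intro mult_right_mono) auto
      also have "... \<le> \<bar>c2 - c1\<bar> * M" using y by (intro mult_left_mono) auto
      finally show ?thesis .
    qed
    then have "(c2 - 1) * y \<le> \<bar>c2 - c1\<bar> * M + (c1 - 1) * y" by (simp add: algebra_simps)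
    then show "exp ((c2 - 1) * y) \<le> exp (\<bar>c2 - c1\<bar> * M) * exp ((c1 - 1) * y)"
      by (simp add: mult_exp_exp)
  qed
  also have "... = exp (\<bar>c2 - c1\<bar> * M) * Gf c1 M" unfolding Gf_def by simp
  finally show ?thesis .
qed

lemma lnGf_lip: assumes "0 < M" shows "\<bar>ln (Gf c1 M) - ln (Gf c2 M)\<bar> \<le> M * \<bar>c1 - c2\<bar>"
proof -
  have *: "ln (Gf c2 M) \<le> \<bar>c2 - c1\<bar> * M + ln (Gf c1 M)" for c1 c2
  proof -
    have pos: "Gf c1 M > 0" "Gf c2 M > 0" using Gf_pos[OF assms] by auto
    have "ln (Gf c2 M) \<le> ln (exp (\<bar>c2 - c1\<bar> * M) * Gf c1 M)"
    proof -
      have lip: "Gf c2 M \<le> exp (\<bar>c2 - c1\<bar> * M) * Gf c1 M" by (rule Gf_lip) (use assms in simp)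
      have q: "0 < exp (\<bar>c2 - c1\<bar> * M) * Gf c1 M" using pos by simp
      show ?thesis using lip pos(2) q by (simp only: ln_le_cancel_iff)
    qed
    also have "... = \<bar>c2 - c1\<bar> * M + ln (Gf c1 M)"
      using pos by (subst ln_mult) auto
    finally show ?thesis .
  qed
  from *[of c1 c2] *[of c2 c1] show ?thesis by (simp add: abs_minus_commute algebra_simps abs_le_iff)
qed

lemma Gf_lim_lt1: assumes "c < 1" shows "((\<lambda>M. Gf c M) \<longlongrightarrow> 1 / (1 - c)) at_top"
proof -
  have "((\<lambda>M::real. (exp ((c - 1) * M) - 1) / (c - 1)) \<longlongrightarrow> - inverse (c - 1)) at_top"
    using assms by real_asymp
  moreover have "- inverse (c - 1) = 1 / (1 - c)" using assms by (simp add: field_simps)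
  moreover have ev: "eventually (\<lambda>M. (exp ((c - 1) * M) - 1) / (c - 1) = Gf c M) at_top"
    using eventually_ge_at_top[of 0] by eventually_elim (use assms in \<open>simp add: Gf_closed\<close>)
  ultimately show ?thesis using tendsto_cong[OF ev] by simp
qed

lemma Gf_lim_ge1: assumes "1 \<le> c" shows "filterlim (\<lambda>M. Gf c M) at_top at_top"
proof (cases "c = 1")
  case True
  have ev: "eventually (\<lambda>M. M = Gf c M) at_top"
    using eventually_ge_at_top[of 0] by eventually_elim (use True in \<open>simp add: Gf_closed\<close>)
  show ?thesis by (rule filterlim_cong[OF refl refl ev, THEN iffD1]) (rule filterlim_ident)
next
  case False
  then have c: "c > 1" using assms by simp
  have "filterlim (\<lambda>M::real. (exp ((c - 1) * M) - 1) / (c - 1)) at_top at_top"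
    using c by real_asymp
  moreover have ev: "eventually (\<lambda>M. (exp ((c - 1) * M) - 1) / (c - 1) = Gf c M) at_top"
    using eventually_ge_at_top[of 0] by eventually_elim (use c in \<open>simp add: Gf_closed\<close>)
  ultimately show ?thesis using filterlim_cong[OF refl refl ev] by simp
qed

lemma Gf_deriv: "((\<lambda>c. Gf c M) has_real_derivative Gd c M) (at c)"
proof -
  have "((\<lambda>c. integral (cbox 0 M) (\<lambda>y. exp ((c - 1) * y))) has_field_derivative
      integral (cbox 0 M) (\<lambda>y. y * exp ((c - 1) * y))) (at c within UNIV)"
  proof (rule leibniz_rule_field_derivative)
    show "((\<lambda>c. exp ((c - 1) * t)) has_field_derivative t * exp ((x - 1) * t)) (at x within UNIV)" for x t
      by (auto intro!: derivative_eq_intros)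
    show "(\<lambda>y. exp ((x - 1) * y)) integrable_on cbox 0 M" for x :: real
      by (intro integrable_continuous continuous_intros)
    show "continuous_on (UNIV \<times> cbox 0 M) (\<lambda>(x, t). t * exp ((x - 1) * t))"
      by (simp add: split_beta) (intro continuous_intros)
  qed auto
  then show ?thesis unfolding Gf_def Gd_def by simp
qed

lemma Gd_deriv: "((\<lambda>c. Gd c M) has_real_derivative Gdd c M) (at c)"
proof -
  have "((\<lambda>c. integral (cbox 0 M) (\<lambda>y. y * exp ((c - 1) * y))) has_field_derivative
      integral (cbox 0 M) (\<lambda>y. y * (y * exp ((c - 1) * y)))) (at c within UNIV)"
  proof (rule leibniz_rule_field_derivative)
    show "((\<lambda>c. t * exp ((c - 1) * t)) has_field_derivative t * (t * exp ((x - 1) * t))) (at x within UNIV)" for x t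
      by (auto intro!: derivative_eq_intros)
    show "(\<lambda>y. y * exp ((x - 1) * y)) integrable_on cbox 0 M" for x :: real
      by (intro integrable_continuous continuous_intros)
    show "continuous_on (UNIV \<times> cbox 0 M) (\<lambda>(x, t). t * (t * exp ((x - 1) * t)))"
      by (simp add: split_beta) (intro continuous_intros)
  qed auto
  then show ?thesis unfolding Gdd_def Gd_def by simp
qed

lemma Gf_cont: "continuous_on UNIV (\<lambda>c. Gf c M)"
  using Gf_deriv by (intro continuous_at_imp_continuous_on ballI DERIV_isCont) blast

lemma Gd_cont: "continuous_on UNIV (\<lambda>c. Gd c M)"
  using Gd_deriv by (intro continuous_at_imp_continuous_on ballI DERIV_isCont) blast

lemma lnGf_deriv: assumes "0 < M" shows "((\<lambda>c. ln (Gf c M)) has_real_derivative mG c M) (at c)"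
proof -
  have "((\<lambda>c. ln (Gf c M)) has_real_derivative inverse (Gf c M) * Gd c M) (at c)"
    by (rule DERIV_chain2[OF DERIV_ln Gf_deriv]) (rule Gf_pos[OF assms])
  then show ?thesis unfolding mG_def by (simp add: field_simps)
qed

lemma Gd_bounds: assumes "0 \<le> M" shows "0 \<le> Gd c M" "Gd c M \<le> M * Gf c M"
proof -
  show "0 \<le> Gd c M" unfolding Gd_def
    by (rule integral_nonneg) (auto intro!: integrable_continuous_interval continuous_intros)
  have "Gd c M \<le> integral {0..M} (\<lambda>y. M * exp ((c - 1) * y))" unfolding Gd_def
    by (rule integral_le) (auto intro!: integrable_continuous_interval continuous_intros mult_right_mono)
  also have "... = M * Gf c M" unfolding Gf_def by simp
  finally show "Gd c M \<le> M * Gf c M" .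
qed

lemma mG_bounds: assumes "0 < M" shows "0 \<le> mG c M" "mG c M \<le> M"
  using Gd_bounds[of M c] Gf_pos[OF assms, of c] assms unfolding mG_def
  by (auto simp: field_simps)

lemma mG_cont: assumes "0 < M" shows "continuous_on UNIV (\<lambda>c. mG c M)"
proof -
  have nz: "\<And>c. Gf c M \<noteq> 0" using Gf_pos[OF assms] by (metis less_irrefl)
  show ?thesis unfolding mG_def
    by (intro continuous_on_divide Gd_cont Gf_cont) (use nz in auto)
qed

lemma mG_closed:
  assumes "0 < M" "c \<noteq> 1"
  shows "mG c M = ((M * (c - 1) - 1) * exp ((c - 1) * M) + 1) / ((c - 1) * (exp ((c - 1) * M) - 1))"
proof -
  have d: "c - 1 \<noteq> 0" using assms by simp
  have E: "exp ((c - 1) * M) - 1 \<noteq> 0" using assms by simp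
  have aux: "\<And>d E. d \<noteq> 0 \<Longrightarrow> E - 1 \<noteq> 0 \<Longrightarrow>
     ((M / d - 1 / d^2) * E + 1 / d^2) / ((E - 1) / d) = ((M * d - 1) * E + 1) / (d * (E - 1))"
    by (simp add: field_simps power2_eq_square)
  show ?thesis unfolding mG_def Gd_closed[OF less_imp_le[OF assms(1)] assms(2)]
    Gf_closed[OF less_imp_le[OF assms(1)]] using assms(2) aux[OF d E] by simp
qed

lemma mG_lim_top: assumes "0 < M" shows "((\<lambda>c. mG c M) \<longlongrightarrow> M) at_top"
proof -
  have "((\<lambda>c::real. ((M*(c-1) - 1)*exp((c-1)*M) + 1)/((c-1)*(exp((c-1)*M) - 1))) \<longlongrightarrow> M) at_top"
    using assms by real_asymp
  moreover have ev: "eventually (\<lambda>c. ((M*(c-1) - 1)*exp((c-1)*M) + 1)/((c-1)*(exp((c-1)*M) - 1)) = mG c M) at_top"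
    using eventually_ge_at_top[of 2] by eventually_elim (use assms in \<open>simp add: mG_closed\<close>)
  ultimately show ?thesis using tendsto_cong[OF ev] by simp
qed

lemma mG_lim_bot: assumes "0 < M" shows "((\<lambda>c. mG c M) \<longlongrightarrow> 0) at_bot"
proof -
  have "((\<lambda>c::real. ((M*(c-1) - 1)*exp((c-1)*M) + 1)/((c-1)*(exp((c-1)*M) - 1))) \<longlongrightarrow> 0) at_bot"
    using assms by real_asymp
  moreover have ev: "eventually (\<lambda>c. ((M*(c-1) - 1)*exp((c-1)*M) + 1)/((c-1)*(exp((c-1)*M) - 1)) = mG c M) at_bot"
    using eventually_le_at_bot[of 0] by eventually_elim (use assms in \<open>simp add: mG_closed\<close>)
  ultimately show ?thesis using tendsto_cong[OF ev] by simp
qed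

lemma mG0_lim: "((\<lambda>M. mG 0 M) \<longlongrightarrow> 1) at_top"
proof -
  have "((\<lambda>M::real. ((M*(0-1) - 1)*exp((0-1)*M) + 1)/((0-1)*(exp((0-1)*M) - 1))) \<longlongrightarrow> 1) at_top"
    by real_asymp
  moreover have ev: "eventually (\<lambda>M. ((M*(0-1) - 1)*exp((0-1)*M) + 1)/((0-1)*(exp((0-1)*M) - 1)) = mG 0 M) at_top"
    using eventually_gt_at_top[of 0] by eventually_elim (simp add: mG_closed)
  ultimately show ?thesis using tendsto_cong[OF ev] by simp
qed

lemma lnGf_strict: assumes M: "0 < M" shows "strictly_convex_on UNIV (\<lambda>c. ln (Gf c M))"
  unfolding strictly_convex_on_def
proof (intro conjI convex_UNIV ballI allI impI)
  fix c1 c2 u :: real assume h: "c1 \<noteq> c2 \<and> 0 < u \<and> u < 1"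
  then have u: "0 < u" "u < 1" and c12: "c1 \<noteq> c2" by auto
  define cu where "cu = (1 - u) * c1 + u * c2"
  define A where "A = ln (Gf c1 M)"
  define B where "B = ln (Gf c2 M)"
  have G1: "Gf c1 M > 0" and G2: "Gf c2 M > 0" using Gf_pos[OF M] by auto
  have eA: "exp A = Gf c1 M" unfolding A_def using G1 by simp
  have eB: "exp B = Gf c2 M" unfolding B_def using G2 by simp
  define K where "K = exp ((1 - u) * A + u * B)"
  define y0 where "y0 = (A - B) / (c1 - c2)"
  define f where "f y = indicator {0..M} y * exp ((cu - 1) * y)" for y :: real
  define g where "g y = K * ((1 - u) / Gf c1 M * (indicator {0..M} y * exp ((c1 - 1) * y))
      + u / Gf c2 M * (indicator {0..M} y * exp ((c2 - 1) * y)))" for y :: real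
  have pw: "exp ((cu - 1) * y) \<le> K * ((1 - u) * exp ((c1 - 1) * y) / Gf c1 M + u * exp ((c2 - 1) * y) / Gf c2 M)"
     and pws: "y \<noteq> y0 \<Longrightarrow> exp ((cu - 1) * y) < K * ((1 - u) * exp ((c1 - 1) * y) / Gf c1 M + u * exp ((c2 - 1) * y) / Gf c2 M)"
    for y
  proof -
    define s1 where "s1 = (c1 - 1) * y - A"
    define s2 where "s2 = (c2 - 1) * y - B"
    have e: "(cu - 1) * y = ((1 - u) * A + u * B) + ((1 - u) * s1 + u * s2)"
      unfolding s1_def s2_def cu_def by (simp add: algebra_simps)
    have e1: "exp s1 = exp ((c1 - 1) * y) / Gf c1 M" unfolding s1_def using eA by (simp add: exp_diff)
    have e2: "exp s2 = exp ((c2 - 1) * y) / Gf c2 M" unfolding s2_def using eB by (simp add: exp_diff)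
    have eq: "exp ((cu - 1) * y) = K * exp ((1 - u) * s1 + u * s2)"
      unfolding e K_def by (simp add: exp_add)
    have rhs: "K * ((1 - u) * exp ((c1 - 1) * y) / Gf c1 M + u * exp ((c2 - 1) * y) / Gf c2 M)
        = K * ((1 - u) * exp s1 + u * exp s2)" unfolding e1 e2 by simp
    have Kp: "K > 0" unfolding K_def by simp
    show "exp ((cu - 1) * y) \<le> K * ((1 - u) * exp ((c1 - 1) * y) / Gf c1 M + u * exp ((c2 - 1) * y) / Gf c2 M)"
      unfolding eq rhs using exp_convex_ineq(1)[OF u, of s1 s2] Kp by (intro mult_left_mono) auto
    assume "y \<noteq> y0"
    then have "s1 \<noteq> s2" unfolding s1_def s2_def y0_def using c12 by (auto simp: field_simps)
    then show "exp ((cu - 1) * y) < K * ((1 - u) * exp ((c1 - 1) * y) / Gf c1 M + u * exp ((c2 - 1) * y) / Gf c2 M)"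
      unfolding eq rhs using exp_convex_ineq(2)[OF u, of s1 s2] Kp by (intro mult_strict_left_mono) auto
  qed
  have fg: "f y \<le> g y" for y
    unfolding f_def g_def using pw[of y] by (auto simp: indicator_def)
  define p where "p = (if y0 < M then max 0 y0 else 0)"
  have pq: "p < M" unfolding p_def using M by auto
  have fgs: "f y < g y" if "p < y" "y < M" for y
  proof -
    have y: "y \<in> {0..M}" "y \<noteq> y0" using that M unfolding p_def by (auto split: if_splits)
    then show ?thesis unfolding f_def g_def using pws[of y] by (auto simp: indicator_def)
  qed
  have intf: "integrable lborel f" unfolding f_def by (rule Gf_integrable)
  have i1: "integrable lborel (\<lambda>y. (1 - u) / Gf c1 M * (indicator {0..M} y * exp ((c1 - 1) * y)))"
    by (intro integrable_mult_right Gf_integrable)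
  have i2: "integrable lborel (\<lambda>y. u / Gf c2 M * (indicator {0..M} y * exp ((c2 - 1) * y)))"
    by (intro integrable_mult_right Gf_integrable)
  have intg: "integrable lborel g" unfolding g_def
    by (rule integrable_mult_right[OF Bochner_Integration.integrable_add[OF i1 i2]])
  have "integral\<^sup>L lborel f < integral\<^sup>L lborel g"
    by (rule integral_strict_lborel[OF intf intg fg pq fgs])
  moreover have "integral\<^sup>L lborel f = Gf cu M" unfolding f_def by (rule Gf_lborel)
  moreover have "integral\<^sup>L lborel g = K"
  proof -
    have "integral\<^sup>L lborel g = K * ((1 - u) / Gf c1 M * Gf c1 M + u / Gf c2 M * Gf c2 M)"
    proof -
      show ?thesis unfolding g_def integral_mult_right_zero Bochner_Integration.integral_add[OF i1 i2]
        by (simp add: Gf_lborel)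
    qed
    also have "... = K" using G1 G2 by simp
    finally show ?thesis .
  qed
  ultimately have "Gf cu M < K" by simp
  moreover have "0 < Gf cu M" by (rule Gf_pos[OF M])
  moreover have "0 < K" by (simp add: K_def)
  ultimately have "ln (Gf cu M) < ln K" by simp
  then show "ln (Gf ((1 - u) * c1 + u * c2) M) < (1 - u) * ln (Gf c1 M) + u * ln (Gf c2 M)"
    unfolding K_def cu_def A_def B_def by simp
qed


lemma dens_int_bounded:
  assumes b: "\<beta> > 0" and f: "f \<in> borel_measurable borel"
    and B: "\<And>l. l \<in> {lam_minus \<beta>..lam_plus \<beta>} \<Longrightarrow> \<bar>f l\<bar> \<le> B"
  shows "integrable lborel (\<lambda>l. mp_density \<beta> l * f l)"
proof (rule Bochner_Integration.integrable_bound)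
  show "integrable lborel (\<lambda>l. \<bar>B\<bar> * mp_density \<beta> l)"
    by (intro integrable_mult_right dens_integrable b)
  show "(\<lambda>l. mp_density \<beta> l * f l) \<in> borel_measurable lborel" using f by measurable
  show "AE l in lborel. norm (mp_density \<beta> l * f l) \<le> norm (\<bar>B\<bar> * mp_density \<beta> l)"
  proof (intro AE_I2)
    fix l
    show "norm (mp_density \<beta> l * f l) \<le> norm (\<bar>B\<bar> * mp_density \<beta> l)"
    proof (cases "l \<in> {lam_minus \<beta>..lam_plus \<beta>}")
      case True
      have "\<bar>f l\<bar> \<le> \<bar>B\<bar>" using B[OF True] by simp
      then show ?thesis using dens_nonneg[OF b, of l]
        by (simp add: abs_mult) (metis mult.commute mult_left_mono)
    next
      case False
      then show ?thesis using dens_zero[OF b, of l] by auto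
    qed
  qed
qed

lemma dens_int_cont:
  assumes b: "\<beta> > 0" and f: "continuous_on UNIV f"
  shows "integrable lborel (\<lambda>l. mp_density \<beta> l * f l)"
proof -
  have "compact (f ` {lam_minus \<beta>..lam_plus \<beta>})"
    by (intro compact_continuous_image continuous_on_subset[OF f]) auto
  then obtain B where "\<forall>y \<in> f ` {lam_minus \<beta>..lam_plus \<beta>}. norm y \<le> B"
    using compact_imp_bounded bounded_iff by metis
  then have B: "\<And>l. l \<in> {lam_minus \<beta>..lam_plus \<beta>} \<Longrightarrow> \<bar>f l\<bar> \<le> B" by auto
  show ?thesis
    by (rule dens_int_bounded[OF b _ B]) (rule borel_measurable_continuous_onI[OF f])
qed

lemma mp_int_mono:
  assumes b: "\<beta> > 0"
    and fi: "integrable lborel (\<lambda>l. mp_density \<beta> l * f l)"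
    and gi: "integrable lborel (\<lambda>l. mp_density \<beta> l * g l)"
    and le: "\<And>l. l \<in> {lam_minus \<beta>..lam_plus \<beta>} \<Longrightarrow> f l \<le> g l" and le0: "f 0 \<le> g 0"
  shows "mp_int \<beta> f \<le> mp_int \<beta> g"
proof -
  have "mp_atom \<beta> * f 0 \<le> mp_atom \<beta> * g 0" using le0 mp_atom_nonneg by (intro mult_left_mono) auto
  moreover have "(\<integral>l. mp_density \<beta> l * f l \<partial>lborel) \<le> (\<integral>l. mp_density \<beta> l * g l \<partial>lborel)"
  proof (rule integral_mono[OF fi gi])
    fix l show "mp_density \<beta> l * f l \<le> mp_density \<beta> l * g l"
    proof (cases "l \<in> {lam_minus \<beta>..lam_plus \<beta>}")
      case True then show ?thesis using le dens_nonneg[OF b] by (intro mult_left_mono) auto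
    next
      case False then show ?thesis using dens_zero[OF b, of l] by auto
    qed
  qed
  ultimately show ?thesis unfolding mp_int_def by simp
qed

lemma mp_int_strict_convex:
  assumes b: "\<beta> > 0" and xb: "x < lam_plus \<beta>" and S: "convex S"
    and int: "\<And>\<alpha>. \<alpha> \<in> S \<Longrightarrow> integrable lborel (\<lambda>l. mp_density \<beta> l * F \<alpha> l)"
    and cv: "\<And>\<alpha>1 \<alpha>2 u l. \<alpha>1 \<in> S \<Longrightarrow> \<alpha>2 \<in> S \<Longrightarrow> 0 < u \<Longrightarrow> u < 1 \<Longrightarrow> l \<in> {lam_minus \<beta>..lam_plus \<beta>} \<Longrightarrow>
       F ((1 - u) * \<alpha>1 + u * \<alpha>2) l \<le> (1 - u) * F \<alpha>1 l + u * F \<alpha>2 l"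
    and scv: "\<And>\<alpha>1 \<alpha>2 u l. \<alpha>1 \<in> S \<Longrightarrow> \<alpha>2 \<in> S \<Longrightarrow> \<alpha>1 \<noteq> \<alpha>2 \<Longrightarrow> 0 < u \<Longrightarrow> u < 1 \<Longrightarrow>
       lam_minus \<beta> < l \<Longrightarrow> l < lam_plus \<beta> \<Longrightarrow> l \<noteq> x \<Longrightarrow>
       F ((1 - u) * \<alpha>1 + u * \<alpha>2) l < (1 - u) * F \<alpha>1 l + u * F \<alpha>2 l"
    and atom: "\<And>\<alpha>1 \<alpha>2 u. \<alpha>1 \<in> S \<Longrightarrow> \<alpha>2 \<in> S \<Longrightarrow> 0 < u \<Longrightarrow> u < 1 \<Longrightarrow> mp_atom \<beta> > 0 \<Longrightarrow>
       F ((1 - u) * \<alpha>1 + u * \<alpha>2) 0 \<le> (1 - u) * F \<alpha>1 0 + u * F \<alpha>2 0"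
  shows "strictly_convex_on S (\<lambda>\<alpha>. mp_int \<beta> (F \<alpha>))"
  unfolding strictly_convex_on_def
proof (intro conjI S ballI allI impI)
  fix \<alpha>1 \<alpha>2 u :: real assume a1: "\<alpha>1 \<in> S" and a2: "\<alpha>2 \<in> S" and h: "\<alpha>1 \<noteq> \<alpha>2 \<and> 0 < u \<and> u < 1"
  then have u: "0 < u" "u < 1" and ne: "\<alpha>1 \<noteq> \<alpha>2" by auto
  define au where "au = (1 - u) * \<alpha>1 + u * \<alpha>2"
  have au: "au \<in> S" unfolding au_def using convexD[OF S a1 a2, of "1 - u" u] u by simp
  have at: "mp_atom \<beta> * F au 0 \<le> (1 - u) * (mp_atom \<beta> * F \<alpha>1 0) + u * (mp_atom \<beta> * F \<alpha>2 0)"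
  proof (cases "mp_atom \<beta> > 0")
    case True
    have "mp_atom \<beta> * F au 0 \<le> mp_atom \<beta> * ((1 - u) * F \<alpha>1 0 + u * F \<alpha>2 0)"
      using atom[OF a1 a2 u True] True unfolding au_def by (intro mult_left_mono) auto
    then show ?thesis by (simp add: algebra_simps)
  next
    case False then have "mp_atom \<beta> = 0" using mp_atom_nonneg[of \<beta>] by simp
    then show ?thesis by simp
  qed
  let ?f = "\<lambda>l. mp_density \<beta> l * F au l"
  let ?g = "\<lambda>l. (1 - u) * (mp_density \<beta> l * F \<alpha>1 l) + u * (mp_density \<beta> l * F \<alpha>2 l)"
  have ig: "integrable lborel ?g" using int[OF a1] int[OF a2] by simp
  have "integral\<^sup>L lborel ?f < integral\<^sup>L lborel ?g"
  proof (rule integral_strict_lborel[OF int[OF au] ig])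
    fix l show "?f l \<le> ?g l"
    proof (cases "l \<in> {lam_minus \<beta>..lam_plus \<beta>}")
      case True
      have "?f l \<le> mp_density \<beta> l * ((1 - u) * F \<alpha>1 l + u * F \<alpha>2 l)"
        using cv[OF a1 a2 u True] dens_nonneg[OF b] unfolding au_def by (intro mult_left_mono) auto
      then show ?thesis by (simp add: algebra_simps)
    next
      case False then show ?thesis using dens_zero[OF b, of l] by auto
    qed
  next
    show "max (lam_minus \<beta>) x < lam_plus \<beta>" using xb lam_facts(4)[OF b] by simp
  next
    fix l assume l: "max (lam_minus \<beta>) x < l" "l < lam_plus \<beta>"
    have "?f l < mp_density \<beta> l * ((1 - u) * F \<alpha>1 l + u * F \<alpha>2 l)"
      using scv[OF a1 a2 ne u, of l] dens_pos[OF b, of l] l unfolding au_def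
      by (intro mult_strict_left_mono) auto
    then show "?f l < ?g l" by (simp add: algebra_simps)
  qed
  also have "integral\<^sup>L lborel ?g = (1 - u) * integral\<^sup>L lborel (\<lambda>l. mp_density \<beta> l * F \<alpha>1 l)
      + u * integral\<^sup>L lborel (\<lambda>l. mp_density \<beta> l * F \<alpha>2 l)"
    using int[OF a1] int[OF a2] by simp
  finally show "mp_int \<beta> (F ((1 - u) * \<alpha>1 + u * \<alpha>2)) < (1 - u) * mp_int \<beta> (F \<alpha>1) + u * mp_int \<beta> (F \<alpha>2)"
    using at unfolding mp_int_def au_def by (simp add: algebra_simps)
qed

lemma dens_bound_aux:
  assumes b: "\<beta> > 0" and h: "l \<in> {lam_minus \<beta>..lam_plus \<beta>} \<Longrightarrow> \<bar>v\<bar> \<le> \<bar>C\<bar>"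
  shows "norm (mp_density \<beta> l * v) \<le> \<bar>C\<bar> * mp_density \<beta> l"
proof (cases "l \<in> {lam_minus \<beta>..lam_plus \<beta>}")
  case True
  have d: "0 \<le> mp_density \<beta> l" by (rule dens_nonneg[OF b])
  have "mp_density \<beta> l * \<bar>v\<bar> \<le> mp_density \<beta> l * \<bar>C\<bar>" by (rule mult_left_mono[OF h[OF True] d])
  then show ?thesis using d by (simp add: abs_mult mult.commute)
next
  case False then show ?thesis using dens_zero[OF b, of l] by auto
qed

lemma mp_int_deriv:
  fixes F F' :: "real \<Rightarrow> real \<Rightarrow> real"
  assumes b: "\<beta> > 0"
    and Fm: "\<And>\<alpha>. F \<alpha> \<in> borel_measurable borel"
    and F'm: "\<And>\<alpha>. F' \<alpha> \<in> borel_measurable borel"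
    and der: "\<And>\<alpha> l. ((\<lambda>\<alpha>. F \<alpha> l) has_real_derivative F' \<alpha> l) (at \<alpha>)"
    and lip: "\<And>\<alpha>1 \<alpha>2 l. l \<in> {lam_minus \<beta>..lam_plus \<beta>} \<Longrightarrow> \<bar>F \<alpha>1 l - F \<alpha>2 l\<bar> \<le> C * \<bar>\<alpha>1 - \<alpha>2\<bar>"
    and intF: "\<And>\<alpha>. integrable lborel (\<lambda>l. mp_density \<beta> l * F \<alpha> l)"
  shows "((\<lambda>\<alpha>. mp_int \<beta> (F \<alpha>)) has_real_derivative mp_int \<beta> (F' \<alpha>0)) (at \<alpha>0)"
proof -
  let ?I = "\<lambda>\<alpha>. (\<integral>l. mp_density \<beta> l * F \<alpha> l \<partial>lborel)"
  have "(?I has_real_derivative (\<integral>l. mp_density \<beta> l * F' \<alpha>0 l \<partial>lborel)) (at \<alpha>0)"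
    unfolding has_field_derivative_iff tendsto_at_iff_sequentially
  proof (intro allI impI)
    fix X :: "nat \<Rightarrow> real" assume X: "\<forall>i. X i \<in> UNIV - {\<alpha>0}" and Xl: "X \<longlonglongrightarrow> \<alpha>0"
    let ?s = "\<lambda>n l. mp_density \<beta> l * ((F (X n) l - F \<alpha>0 l) / (X n - \<alpha>0))"
    have eq: "((\<lambda>y. (?I y - ?I \<alpha>0) / (y - \<alpha>0)) \<circ> X) n = integral\<^sup>L lborel (?s n)" for n
    proof -
      have "?I (X n) - ?I \<alpha>0 = (\<integral>l. mp_density \<beta> l * F (X n) l - mp_density \<beta> l * F \<alpha>0 l \<partial>lborel)"
        using intF[of "X n"] intF[of \<alpha>0] by simp
      then have "((\<lambda>y. (?I y - ?I \<alpha>0) / (y - \<alpha>0)) \<circ> X) n =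
          (\<integral>l. (mp_density \<beta> l * F (X n) l - mp_density \<beta> l * F \<alpha>0 l) / (X n - \<alpha>0) \<partial>lborel)"
        by (simp only: comp_def integral_divide_zero)
      also have "... = integral\<^sup>L lborel (?s n)"
        by (rule Bochner_Integration.integral_cong[OF refl]) (simp add: right_diff_distrib)
      finally show ?thesis .
    qed
    have "(\<lambda>n. integral\<^sup>L lborel (?s n)) \<longlonglongrightarrow> (\<integral>l. mp_density \<beta> l * F' \<alpha>0 l \<partial>lborel)"
    proof (rule integral_dominated_convergence[where w="\<lambda>l. \<bar>C\<bar> * mp_density \<beta> l"])
      show "(\<lambda>l. mp_density \<beta> l * F' \<alpha>0 l) \<in> borel_measurable lborel" using F'm by measurable
      show "?s n \<in> borel_measurable lborel" for n using Fm by measurable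
      show "integrable lborel (\<lambda>l. \<bar>C\<bar> * mp_density \<beta> l)" by (intro integrable_mult_right dens_integrable b)
      show "AE l in lborel. (\<lambda>n. ?s n l) \<longlonglongrightarrow> mp_density \<beta> l * F' \<alpha>0 l"
      proof (intro AE_I2 tendsto_mult tendsto_const)
        fix l
        have "((\<lambda>y. (F y l - F \<alpha>0 l) / (y - \<alpha>0)) \<longlongrightarrow> F' \<alpha>0 l) (at \<alpha>0)"
          using der[of l \<alpha>0] unfolding has_field_derivative_iff by simp
        then show "(\<lambda>n. (F (X n) l - F \<alpha>0 l) / (X n - \<alpha>0)) \<longlonglongrightarrow> F' \<alpha>0 l"
          unfolding tendsto_at_iff_sequentially comp_def using X Xl by blast
      qed
      show "AE l in lborel. norm (?s n l) \<le> \<bar>C\<bar> * mp_density \<beta> l" for n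
      proof (intro AE_I2)
        fix l
        show "norm (?s n l) \<le> \<bar>C\<bar> * mp_density \<beta> l"
        proof (rule dens_bound_aux[OF b])
          assume True: "l \<in> {lam_minus \<beta>..lam_plus \<beta>}"
          have ne: "X n - \<alpha>0 \<noteq> 0" using X by auto
          have "\<bar>(F (X n) l - F \<alpha>0 l) / (X n - \<alpha>0)\<bar> \<le> C"
            using lip[OF True, of "X n" \<alpha>0] ne by (simp add: abs_divide divide_le_eq)
          then show "\<bar>(F (X n) l - F \<alpha>0 l) / (X n - \<alpha>0)\<bar> \<le> \<bar>C\<bar>" by simp
        qed
      qed
    qed
    then show "((\<lambda>y. (?I y - ?I \<alpha>0) / (y - \<alpha>0)) \<circ> X) \<longlonglongrightarrow> (\<integral>l. mp_density \<beta> l * F' \<alpha>0 l \<partial>lborel)"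
      unfolding eq .
  qed
  then show ?thesis unfolding mp_int_def
    by (intro DERIV_add DERIV_cmult der)
qed

lemma mp_int_cont:
  fixes F' :: "real \<Rightarrow> real \<Rightarrow> real"
  assumes b: "\<beta> > 0"
    and F'm: "\<And>\<alpha>. F' \<alpha> \<in> borel_measurable borel"
    and cont: "\<And>l. continuous_on UNIV (\<lambda>\<alpha>. F' \<alpha> l)"
    and bd: "\<And>\<alpha> l. l \<in> {lam_minus \<beta>..lam_plus \<beta>} \<Longrightarrow> \<bar>F' \<alpha> l\<bar> \<le> C"
  shows "continuous_on UNIV (\<lambda>\<alpha>. mp_int \<beta> (F' \<alpha>))"
proof -
  let ?I = "\<lambda>\<alpha>. (\<integral>l. mp_density \<beta> l * F' \<alpha> l \<partial>lborel)"
  have "isCont ?I \<alpha>0" for \<alpha>0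
  proof (rule continuous_at_sequentiallyI)
    fix X :: "nat \<Rightarrow> real" assume Xl: "X \<longlonglongrightarrow> \<alpha>0"
    show "(\<lambda>n. ?I (X n)) \<longlonglongrightarrow> ?I \<alpha>0"
    proof (rule integral_dominated_convergence[where w="\<lambda>l. \<bar>C\<bar> * mp_density \<beta> l"])
      show "(\<lambda>l. mp_density \<beta> l * F' \<alpha>0 l) \<in> borel_measurable lborel" using F'm by measurable
      show "(\<lambda>l. mp_density \<beta> l * F' (X n) l) \<in> borel_measurable lborel" for n using F'm by measurable
      show "integrable lborel (\<lambda>l. \<bar>C\<bar> * mp_density \<beta> l)" by (intro integrable_mult_right dens_integrable b)
      show "AE l in lborel. (\<lambda>n. mp_density \<beta> l * F' (X n) l) \<longlonglongrightarrow> mp_density \<beta> l * F' \<alpha>0 l"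
      proof (intro AE_I2 tendsto_mult tendsto_const)
        fix l
        have "isCont (\<lambda>\<alpha>. F' \<alpha> l) \<alpha>0" using cont[of l] by (simp add: continuous_on_eq_continuous_at)
        then show "(\<lambda>n. F' (X n) l) \<longlonglongrightarrow> F' \<alpha>0 l"
          using Xl unfolding continuous_at_sequentially comp_def by blast
      qed
      show "AE l in lborel. norm (mp_density \<beta> l * F' (X n) l) \<le> \<bar>C\<bar> * mp_density \<beta> l" for n
      proof (intro AE_I2)
        fix l
        show "norm (mp_density \<beta> l * F' (X n) l) \<le> \<bar>C\<bar> * mp_density \<beta> l"
          by (rule dens_bound_aux[OF b]) (use bd[of l "X n"] in auto)
      qed
    qed
  qed
  moreover have "isCont (\<lambda>\<alpha>. F' \<alpha> 0) \<alpha>0" for \<alpha>0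
    using cont[of 0] by (simp add: continuous_on_eq_continuous_at)
  ultimately show ?thesis unfolding mp_int_def
    by (intro continuous_at_imp_continuous_on ballI continuous_intros) auto
qed

lemma mp_int_lim_top:
  fixes F' :: "real \<Rightarrow> real \<Rightarrow> real" and L :: "real \<Rightarrow> real"
  assumes b: "\<beta> > 0"
    and F'm: "\<And>\<alpha>. F' \<alpha> \<in> borel_measurable borel" and Lm: "L \<in> borel_measurable borel"
    and lim: "\<And>l. ((\<lambda>\<alpha>. F' \<alpha> l) \<longlongrightarrow> L l) at_top"
    and bd: "\<And>\<alpha> l. l \<in> {lam_minus \<beta>..lam_plus \<beta>} \<Longrightarrow> \<bar>F' \<alpha> l\<bar> \<le> C"
  shows "((\<lambda>\<alpha>. mp_int \<beta> (F' \<alpha>)) \<longlongrightarrow> mp_int \<beta> L) at_top"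
proof -
  have "((\<lambda>\<alpha>. \<integral>l. mp_density \<beta> l * F' \<alpha> l \<partial>lborel) \<longlongrightarrow> (\<integral>l. mp_density \<beta> l * L l \<partial>lborel)) at_top"
  proof (rule integral_dominated_convergence_at_top[where w="\<lambda>l. \<bar>C\<bar> * mp_density \<beta> l"])
    show "(\<lambda>l. mp_density \<beta> l * L l) \<in> borel_measurable lborel" using Lm by measurable
    show "(\<lambda>l. mp_density \<beta> l * F' t l) \<in> borel_measurable lborel" for t using F'm by measurable
    show "integrable lborel (\<lambda>l. \<bar>C\<bar> * mp_density \<beta> l)" by (intro integrable_mult_right dens_integrable b)
    show "AE l in lborel. ((\<lambda>t. mp_density \<beta> l * F' t l) \<longlongrightarrow> mp_density \<beta> l * L l) at_top"
      by (intro AE_I2 tendsto_mult tendsto_const lim)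
    show "\<forall>\<^sub>F t in at_top. AE l in lborel. norm (mp_density \<beta> l * F' t l) \<le> \<bar>C\<bar> * mp_density \<beta> l"
    proof (intro always_eventually allI AE_I2)
      fix t l
      show "norm (mp_density \<beta> l * F' t l) \<le> \<bar>C\<bar> * mp_density \<beta> l"
        by (rule dens_bound_aux[OF b]) (use bd[of l t] in auto)
    qed
  qed
  then show ?thesis unfolding mp_int_def by (intro tendsto_add tendsto_mult tendsto_const lim)
qed


lemma enn2ereal_fin: "X \<noteq> \<infinity> \<Longrightarrow> enn2ereal X = ereal (enn2real X)"
  by (cases X rule: ennreal_cases) auto

lemma e2ennreal_max0: "e2ennreal x = e2ennreal (max x 0)"
  by (cases "x \<le> 0") (auto simp: e2ennreal_neg max_def)

lemma Gf_nz: "0 < M \<Longrightarrow> Gf c M \<noteq> 0"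
  using Gf_pos[of M c] by simp

lemma lnGf_comp_cont:
  assumes "0 < M" shows "continuous_on UNIV (\<lambda>l. ln (Gf (\<alpha> * (l - x)) M))"
proof -
  have "continuous_on UNIV (\<lambda>l. Gf (\<alpha> * (l - x)) M)"
    by (rule continuous_on_compose2[OF Gf_cont, of _ "\<lambda>l. \<alpha> * (l - x)"]) (auto intro!: continuous_intros)
  then show ?thesis using Gf_nz[OF assms] by (intro continuous_on_ln) auto
qed

lemma lnGf_comp_meas[measurable]:
  assumes "0 < M" shows "(\<lambda>l. ln (Gf (\<alpha> * (l - x)) M)) \<in> borel_measurable borel"
  by (rule borel_measurable_continuous_onI[OF lnGf_comp_cont[OF assms]])

lemma psiM_eq: "psiM \<beta> x M \<alpha> = mp_int \<beta> (\<lambda>l. ln (Gf (\<alpha> * (l - x)) M))"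
  unfolding psiM_def by (simp add: EY_Gf)

lemma Ydist_measure: assumes "0 \<le> M" shows "measure Ydist {..M} = Gf 0 M"
proof -
  have "emeasure Ydist {..M} = (\<integral>\<^sup>+ y. ennreal (exponential_density 1 y) * indicator {..M} y \<partial>lborel)"
    by (subst emeasure_density) auto
  also have "... = (\<integral>\<^sup>+ y. ennreal (indicator {0..M} y * exp ((0 - 1) * y)) \<partial>lborel)"
    by (rule nn_integral_cong) (auto simp: exponential_density_def indicator_def)
  also have "... = ennreal (\<integral>y. indicator {0..M} y * exp ((0 - 1) * y) \<partial>lborel)"
    by (rule nn_integral_eq_integral[OF Gf_integrable]) auto
  also have "... = ennreal (Gf 0 M)" by (simp only: Gf_lborel)
  finally have "emeasure Ydist {..M} = ennreal (Gf 0 M)" .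
  moreover have "Gf 0 M \<ge> 0" unfolding Gf_def
    by (rule integral_nonneg) (auto intro!: integrable_continuous_interval continuous_intros)
  ultimately show ?thesis by (simp add: measure_def)
qed

lemma YM_integral:
  assumes "0 < M" shows "(\<integral>y. exp (c * y) \<partial>YMdist M) = Gf c M / Gf 0 M"
proof -
  have P: "measure Ydist {..M} = Gf 0 M" using Ydist_measure assms by simp
  have "(\<integral>y. exp (c * y) \<partial>YMdist M) =
      (\<integral>y. (indicator {0..M} y * exp (- y) / measure Ydist {..M}) *\<^sub>R exp (c * y) \<partial>lborel)"
    unfolding YMdist_def by (rule integral_density) auto
  also have "... = (\<integral>y. indicator {0..M} y * exp ((c - 1) * y) / Gf 0 M \<partial>lborel)"
  proof (rule Bochner_Integration.integral_cong[OF refl])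
    fix y :: real
    have e: "exp (- y) * exp (c * y) = exp ((c - 1) * y)" by (simp add: mult_exp_exp algebra_simps)
    show "(indicator {0..M} y * exp (- y) / measure Ydist {..M}) *\<^sub>R exp (c * y) =
        indicator {0..M} y * exp ((c - 1) * y) / Gf 0 M"
      unfolding P using e by (simp add: field_simps)
  qed
  also have "... = Gf c M / Gf 0 M" by (simp add: integral_divide_zero Gf_lborel)
  finally show ?thesis .
qed

lemma psiYM_eq:
  assumes b: "\<beta> > 0" and M: "0 < M"
  shows "psiYM \<beta> x M \<alpha> = psiM \<beta> x M \<alpha> - ln (Gf 0 M)"
proof -
  have G0: "Gf 0 M > 0" using Gf_pos[OF M] by simp
  have "psiYM \<beta> x M \<alpha> = mp_int \<beta> (\<lambda>l. ln (Gf (\<alpha> * (l - x)) M) - ln (Gf 0 M))"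
    unfolding psiYM_def YM_integral[OF M] using Gf_pos[OF M] Gf_nz[OF M] G0
    by (simp add: ln_div)
  also have "... = psiM \<beta> x M \<alpha> - ln (Gf 0 M) * (mp_atom \<beta> + (\<integral>l. mp_density \<beta> l \<partial>lborel))"
  proof -
    have i1: "integrable lborel (\<lambda>l. mp_density \<beta> l * ln (Gf (\<alpha> * (l - x)) M))"
      by (rule dens_int_cont[OF b lnGf_comp_cont[OF M]])
    have i2: "integrable lborel (\<lambda>l. mp_density \<beta> l * ln (Gf 0 M))"
      by (intro integrable_mult_left dens_integrable b)
    have "(\<integral>l. mp_density \<beta> l * (ln (Gf (\<alpha> * (l - x)) M) - ln (Gf 0 M)) \<partial>lborel)
       = (\<integral>l. mp_density \<beta> l * ln (Gf (\<alpha> * (l - x)) M) \<partial>lborel) - (\<integral>l. mp_density \<beta> l \<partial>lborel) * ln (Gf 0 M)"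
      using i1 i2 by (simp add: right_diff_distrib)
    then show ?thesis unfolding mp_int_def psiM_eq by (simp add: algebra_simps)
  qed
  also have "... = psiM \<beta> x M \<alpha> - ln (Gf 0 M)" using mp_mass[OF b] by simp
  finally show ?thesis .
qed

lemma lnGf_mono: assumes "0 < M" "M \<le> M'" shows "ln (Gf c M) \<le> ln (Gf c M')"
proof -
  have "Gf c M \<le> Gf c M'" using assms by (intro Gf_mono) auto
  moreover have "0 < Gf c M" "0 < Gf c M'" using assms by (auto intro: Gf_pos)
  ultimately show ?thesis by simp
qed

lemma psiM_mono:
  assumes b: "\<beta> > 0" and M: "0 < M" "M \<le> M'"
  shows "psiM \<beta> x M \<alpha> \<le> psiM \<beta> x M' \<alpha>"
  unfolding psiM_eq
proof (rule mp_int_mono[OF b])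
  have M': "0 < M'" using M by simp
  show "integrable lborel (\<lambda>l. mp_density \<beta> l * ln (Gf (\<alpha> * (l - x)) M))"
    by (rule dens_int_cont[OF b lnGf_comp_cont[OF M(1)]])
  show "integrable lborel (\<lambda>l. mp_density \<beta> l * ln (Gf (\<alpha> * (l - x)) M'))"
    by (rule dens_int_cont[OF b lnGf_comp_cont[OF M']])
  show "ln (Gf (\<alpha> * (l - x)) M) \<le> ln (Gf (\<alpha> * (l - x)) M')" for l
    by (rule lnGf_mono[OF M])
  show "ln (Gf (\<alpha> * (0 - x)) M) \<le> ln (Gf (\<alpha> * (0 - x)) M')"
    by (rule lnGf_mono[OF M])
qed

lemma lnGf_lim: "((\<lambda>M. ereal (ln (Gf c M))) \<longlongrightarrow> neglog (1 - c)) at_top"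
proof (cases "c < 1")
  case True
  have "((\<lambda>M. ln (Gf c M)) \<longlongrightarrow> ln (1 / (1 - c))) at_top"
    by (rule tendsto_ln[OF Gf_lim_lt1[OF True]]) (use True in simp)
  moreover have "ln (1 / (1 - c)) = - ln (1 - c)" using True by (simp add: ln_div)
  ultimately show ?thesis using True unfolding neglog_def by (simp add: tendsto_ereal)
next
  case False
  have "filterlim (\<lambda>M. ln (Gf c M)) at_top at_top"
    by (rule filterlim_compose[OF ln_at_top Gf_lim_ge1]) (use False in simp)
  then show ?thesis using False unfolding neglog_def tendsto_PInfty_eq_at_top[symmetric] by simp
qed

lemma mono_tendsto_at_top_ereal:
  fixes g :: "real \<Rightarrow> ereal"
  assumes mono: "\<And>M M'. 0 < M \<Longrightarrow> M \<le> M' \<Longrightarrow> g M \<le> g M'"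
    and lim: "(\<lambda>n. g (real (Suc n))) \<longlonglongrightarrow> L"
  shows "(g \<longlongrightarrow> L) at_top"
proof (rule order_tendstoI)
  fix a assume a: "a < L"
  from order_tendstoD(1)[OF lim a] obtain N where "\<And>n. n \<ge> N \<Longrightarrow> a < g (real (Suc n))"
    by (auto simp: eventually_sequentially)
  then have aN: "a < g (real (Suc N))" by simp
  show "eventually (\<lambda>M. a < g M) at_top"
    using eventually_ge_at_top[of "real (Suc N)"]
  proof eventually_elim
    fix M assume "real (Suc N) \<le> M"
    then show "a < g M" using mono[of "real (Suc N)" M] aN by auto
  qed
next
  fix a assume a: "L < a"
  have inc: "incseq (\<lambda>n. g (real (Suc n)))" by (intro monoI mono) auto
  have le: "g (real (Suc n)) \<le> L" for n by (rule incseq_le[OF inc lim])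
  show "eventually (\<lambda>M. g M < a) at_top"
    using eventually_ge_at_top[of 1]
  proof eventually_elim
    fix M :: real assume M: "1 \<le> M"
    have "M \<le> real (Suc (nat \<lceil>M\<rceil>))" by linarith
    then have "g M \<le> g (real (Suc (nat \<lceil>M\<rceil>)))" using M by (intro mono) auto
    also have "... \<le> L" by (rule le)
    finally show "g M < a" using a by simp
  qed
qed

lemma neglog_not_minf: "neglog u \<noteq> - \<infinity>"
  unfolding neglog_def by auto

lemma psiM_limit_general:
  assumes b: "\<beta> > 0"
  shows "((\<lambda>M. ereal (psiM \<beta> x M \<alpha>)) \<longlongrightarrow>
      ereal (mp_atom \<beta>) * neglog (1 + \<alpha> * (x - 0))
      + enn2ereal (\<integral>\<^sup>+ l. ennreal (mp_density \<beta> l) * e2ennreal (max (neglog (1 + \<alpha> * (x - l))) 0) \<partial>lborel)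
      - enn2ereal (\<integral>\<^sup>+ l. ennreal (mp_density \<beta> l) * e2ennreal (max (- neglog (1 + \<alpha> * (x - l))) 0) \<partial>lborel)) at_top"
    and "(\<integral>\<^sup>+ l. ennreal (mp_density \<beta> l) * e2ennreal (max (- neglog (1 + \<alpha> * (x - l))) 0) \<partial>lborel) \<noteq> \<infinity>"
proof -
  define h where "h l = neglog (1 + \<alpha> * (x - l))" for l
  define fs where "fs n l = ln (Gf (\<alpha> * (l - x)) (real (Suc n)))" for n l
  define P where "P = (\<integral>\<^sup>+ l. ennreal (mp_density \<beta> l) * e2ennreal (max (h l) 0) \<partial>lborel)"
  define N where "N = (\<integral>\<^sup>+ l. ennreal (mp_density \<beta> l) * e2ennreal (max (- h l) 0) \<partial>lborel)"
  have dn: "0 \<le> mp_density \<beta> l" for l by (rule dens_nonneg[OF b])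
  have hlim: "((\<lambda>M. ereal (ln (Gf (\<alpha> * (l - x)) M))) \<longlongrightarrow> h l) at_top" for l
  proof -
    have e: "1 - \<alpha> * (l - x) = 1 + \<alpha> * (x - l)" by (simp add: algebra_simps)
    show ?thesis using lnGf_lim[of "\<alpha> * (l - x)", unfolded e] unfolding h_def .
  qed
  have fslim: "(\<lambda>n. ereal (fs n l)) \<longlonglongrightarrow> h l" for l
  proof -
    have "(\<lambda>n. ereal (ln (Gf (\<alpha> * (l - x)) (real n)))) \<longlonglongrightarrow> h l"
      by (rule filterlim_compose[OF hlim filterlim_real_sequentially])
    from LIMSEQ_Suc[OF this] show ?thesis unfolding fs_def .
  qed
  have fsmono: "fs n l \<le> fs m l" if "n \<le> m" for n m l
    unfolding fs_def using that by (intro lnGf_mono) auto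
  have fsmeas[measurable]: "fs n \<in> borel_measurable borel" for n
    unfolding fs_def[abs_def] by (rule lnGf_comp_meas) simp
  have fsint: "integrable lborel (\<lambda>l. mp_density \<beta> l * fs n l)" for n
    unfolding fs_def by (rule dens_int_cont[OF b lnGf_comp_cont]) simp
  have hmeas[measurable]: "h \<in> borel_measurable borel"
    unfolding h_def[abs_def] neglog_def by measurable
  have hnm: "h l \<noteq> - \<infinity>" for l unfolding h_def by (rule neglog_not_minf)
  have Plim: "(\<lambda>n. \<integral>\<^sup>+ l. ennreal (mp_density \<beta> l * fs n l) \<partial>lborel) \<longlonglongrightarrow> P"
    unfolding P_def
  proof (rule nn_integral_LIMSEQ)
    show "incseq (\<lambda>n l. ennreal (mp_density \<beta> l * fs n l))"
      by (intro monoI le_funI ennreal_leI mult_left_mono fsmono dn)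
    show "(\<lambda>l. ennreal (mp_density \<beta> l * fs n l)) \<in> borel_measurable lborel" for n by measurable
    fix l
    have eq: "ennreal (mp_density \<beta> l * fs n l) = ennreal (mp_density \<beta> l) * e2ennreal (ereal (fs n l))" for n
      using dn by (simp add: ennreal_mult' e2ennreal_ereal)
    have "(\<lambda>n. ennreal (mp_density \<beta> l) * e2ennreal (ereal (fs n l))) \<longlonglongrightarrow> ennreal (mp_density \<beta> l) * e2ennreal (h l)"
      by (intro ennreal_tendsto_cmult tendsto_e2ennrealI fslim) simp
    then show "(\<lambda>n. ennreal (mp_density \<beta> l * fs n l)) \<longlonglongrightarrow> ennreal (mp_density \<beta> l) * e2ennreal (max (h l) 0)"
      unfolding eq e2ennreal_max0[of "h l"] .
  qed
  have w_fin: "(\<integral>\<^sup>+ l. ennreal (- (mp_density \<beta> l * fs 0 l)) \<partial>lborel) < \<infinity>"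
    using integrableD(3)[OF fsint[of 0]] by (simp add: less_top)
  have Nn_le: "(\<integral>\<^sup>+ l. ennreal (- (mp_density \<beta> l * fs n l)) \<partial>lborel) \<le> (\<integral>\<^sup>+ l. ennreal (- (mp_density \<beta> l * fs 0 l)) \<partial>lborel)" for n
    by (intro nn_integral_mono ennreal_leI) (use fsmono[of 0 n] dn in \<open>auto intro: mult_left_mono\<close>)
  have Nlim: "(\<lambda>n. \<integral>\<^sup>+ l. ennreal (- (mp_density \<beta> l * fs n l)) \<partial>lborel) \<longlonglongrightarrow> N"
    unfolding N_def
  proof (rule nn_integral_dominated_convergence[where w="\<lambda>l. ennreal (- (mp_density \<beta> l * fs 0 l))"])
    show "(\<lambda>l. ennreal (- (mp_density \<beta> l * fs n l))) \<in> borel_measurable lborel" for n by measurable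
    show "(\<lambda>l. ennreal (mp_density \<beta> l) * e2ennreal (max (- h l) 0)) \<in> borel_measurable lborel"
      using hmeas by measurable
    show "(\<lambda>l. ennreal (- (mp_density \<beta> l * fs 0 l))) \<in> borel_measurable lborel" by measurable
    show "AE l in lborel. ennreal (- (mp_density \<beta> l * fs j l)) \<le> ennreal (- (mp_density \<beta> l * fs 0 l))" for j
      by (intro AE_I2 ennreal_leI) (use fsmono[of 0 j] dn in \<open>auto intro: mult_left_mono\<close>)
    show "integral\<^sup>N lborel (\<lambda>l. ennreal (- (mp_density \<beta> l * fs 0 l))) < \<infinity>" by (rule w_fin)
    show "AE l in lborel. (\<lambda>n. ennreal (- (mp_density \<beta> l * fs n l))) \<longlonglongrightarrow> ennreal (mp_density \<beta> l) * e2ennreal (max (- h l) 0)"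
    proof (intro AE_I2)
      fix l
      have eq: "ennreal (- (mp_density \<beta> l * fs n l)) = ennreal (mp_density \<beta> l) * e2ennreal (- ereal (fs n l))" for n
        using ennreal_mult'[OF dn, of l "- fs n l"] by (simp add: e2ennreal_ereal)
      have "(\<lambda>n. ennreal (mp_density \<beta> l) * e2ennreal (- ereal (fs n l))) \<longlonglongrightarrow> ennreal (mp_density \<beta> l) * e2ennreal (- h l)"
        by (intro ennreal_tendsto_cmult tendsto_e2ennrealI tendsto_uminus_ereal fslim) simp
      then show "(\<lambda>n. ennreal (- (mp_density \<beta> l * fs n l))) \<longlonglongrightarrow> ennreal (mp_density \<beta> l) * e2ennreal (max (- h l) 0)"
        unfolding eq e2ennreal_max0[of "- h l"] .
    qed
  qed
  have Nfin: "N \<noteq> \<infinity>"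
  proof -
    have "N \<le> (\<integral>\<^sup>+ l. ennreal (- (mp_density \<beta> l * fs 0 l)) \<partial>lborel)"
      by (rule LIMSEQ_le_const2[OF Nlim]) (use Nn_le in auto)
    then show ?thesis using w_fin by (auto simp: top_unique)
  qed
  then show "(\<integral>\<^sup>+ l. ennreal (mp_density \<beta> l) * e2ennreal (max (- neglog (1 + \<alpha> * (x - l))) 0) \<partial>lborel) \<noteq> \<infinity>"
    unfolding N_def h_def .
  have Alim: "(\<lambda>n. ereal (mp_atom \<beta>) * ereal (fs n 0)) \<longlonglongrightarrow> ereal (mp_atom \<beta>) * h 0"
    by (intro tendsto_cmult_ereal fslim) simp
  have Anm: "ereal (mp_atom \<beta>) * h 0 \<noteq> - \<infinity>"
    using hnm[of 0] mp_atom_nonneg[of \<beta>] by (cases "h 0") (auto simp: ereal_mult_infty)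
  have eqn: "ereal (psiM \<beta> x (real (Suc n)) \<alpha>) = ereal (mp_atom \<beta>) * ereal (fs n 0)
      + enn2ereal (\<integral>\<^sup>+ l. ennreal (mp_density \<beta> l * fs n l) \<partial>lborel)
      - enn2ereal (\<integral>\<^sup>+ l. ennreal (- (mp_density \<beta> l * fs n l)) \<partial>lborel)" for n
  proof -
    have "psiM \<beta> x (real (Suc n)) \<alpha> = mp_atom \<beta> * fs n 0 + (\<integral>l. mp_density \<beta> l * fs n l \<partial>lborel)"
      unfolding psiM_eq mp_int_def fs_def ..
    also have "(\<integral>l. mp_density \<beta> l * fs n l \<partial>lborel) =
        enn2real (\<integral>\<^sup>+ l. ennreal (mp_density \<beta> l * fs n l) \<partial>lborel)
        - enn2real (\<integral>\<^sup>+ l. ennreal (- (mp_density \<beta> l * fs n l)) \<partial>lborel)"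
      by (rule real_lebesgue_integral_def[OF fsint])
    finally show ?thesis
      using enn2ereal_fin[OF integrableD(2)[OF fsint[of n]]] enn2ereal_fin[OF integrableD(3)[OF fsint[of n]]]
      by simp
  qed
  have "(\<lambda>n. ereal (psiM \<beta> x (real (Suc n)) \<alpha>)) \<longlonglongrightarrow> ereal (mp_atom \<beta>) * h 0 + enn2ereal P - enn2ereal N"
    unfolding eqn
  proof (intro tendsto_diff_ereal_general tendsto_add_ereal_general Alim)
    show "(\<lambda>n. enn2ereal (\<integral>\<^sup>+ l. ennreal (mp_density \<beta> l * fs n l) \<partial>lborel)) \<longlonglongrightarrow> enn2ereal P"
      using Plim by (simp add: tendsto_enn2ereal_iff)
    show "(\<lambda>n. enn2ereal (\<integral>\<^sup>+ l. ennreal (- (mp_density \<beta> l * fs n l)) \<partial>lborel)) \<longlonglongrightarrow> enn2ereal N"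
      using Nlim by (simp add: tendsto_enn2ereal_iff)
    show "\<not> (ereal (mp_atom \<beta>) * h 0 = \<infinity> \<and> enn2ereal P = - \<infinity> \<or> ereal (mp_atom \<beta>) * h 0 = - \<infinity> \<and> enn2ereal P = \<infinity>)"
      using Anm by auto
    show "\<not> (ereal (mp_atom \<beta>) * h 0 + enn2ereal P = \<infinity> \<and> enn2ereal N = \<infinity> \<or>
        ereal (mp_atom \<beta>) * h 0 + enn2ereal P = - \<infinity> \<and> enn2ereal N = - \<infinity>)"
      using Nfin by auto
  qed
  then have "((\<lambda>M. ereal (psiM \<beta> x M \<alpha>)) \<longlongrightarrow> ereal (mp_atom \<beta>) * h 0 + enn2ereal P - enn2ereal N) at_top"
    by (intro mono_tendsto_at_top_ereal) (use psiM_mono[OF b] in auto)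
  then show "((\<lambda>M. ereal (psiM \<beta> x M \<alpha>)) \<longlongrightarrow>
      ereal (mp_atom \<beta>) * neglog (1 + \<alpha> * (x - 0))
      + enn2ereal (\<integral>\<^sup>+ l. ennreal (mp_density \<beta> l) * e2ennreal (max (neglog (1 + \<alpha> * (x - l))) 0) \<partial>lborel)
      - enn2ereal (\<integral>\<^sup>+ l. ennreal (mp_density \<beta> l) * e2ennreal (max (- neglog (1 + \<alpha> * (x - l))) 0) \<partial>lborel)) at_top"
    unfolding P_def N_def h_def .
qed


lemma sc_ineq:
  assumes "strictly_convex_on S f" "c1 \<in> S" "c2 \<in> S" "0 < u" "u < 1"
  shows "f ((1 - u) * c1 + u * c2) \<le> (1 - u) * f c1 + u * f c2"
proof (cases "c1 = c2")
  case True then show ?thesis by (simp add: algebra_simps)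
next
  case False then show ?thesis using assms unfolding strictly_convex_on_def by (meson less_imp_le)
qed

lemma sc_cong:
  assumes "strictly_convex_on S g" "\<And>z. z \<in> S \<Longrightarrow> f z = g z"
  shows "strictly_convex_on S f"
  unfolding strictly_convex_on_def
proof (intro conjI ballI allI impI)
  show cS: "convex S" using assms(1) unfolding strictly_convex_on_def by simp
  fix a b u :: real assume a: "a \<in> S" and b: "b \<in> S" and h: "a \<noteq> b \<and> 0 < u \<and> u < 1"
  have "(1 - u) * a + u * b \<in> S" using convexD[OF cS a b, of "1 - u" u] h by simp
  then show "f ((1 - u) * a + u * b) < (1 - u) * f a + u * f b"
    using assms a b h unfolding strictly_convex_on_def by simp
qed

lemma sc_minus_const:
  assumes "strictly_convex_on S f" shows "strictly_convex_on S (\<lambda>z. f z - c)"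
  using assms unfolding strictly_convex_on_def by (auto simp: algebra_simps)

lemma psiM_strict:
  assumes b: "\<beta> > 0" and xb: "x < lam_plus \<beta>" and M: "0 < M"
  shows "strictly_convex_on UNIV (psiM \<beta> x M)"
proof -
  have e: "psiM \<beta> x M = (\<lambda>\<alpha>. mp_int \<beta> (\<lambda>l. ln (Gf (\<alpha> * (l - x)) M)))"
    by (rule ext) (rule psiM_eq)
  have lin: "((1 - u) * \<alpha>1 + u * \<alpha>2) * (l - x) = (1 - u) * (\<alpha>1 * (l - x)) + u * (\<alpha>2 * (l - x))"
    for u \<alpha>1 \<alpha>2 l :: real by (simp add: algebra_simps)
  note sc = lnGf_strict[OF M]
  show ?thesis unfolding e
  proof (rule mp_int_strict_convex[OF b xb convex_UNIV])
    show "integrable lborel (\<lambda>l. mp_density \<beta> l * ln (Gf (\<alpha> * (l - x)) M))" for \<alpha>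
      by (rule dens_int_cont[OF b lnGf_comp_cont[OF M]])
    show "ln (Gf (((1 - u) * \<alpha>1 + u * \<alpha>2) * (l - x)) M) \<le>
        (1 - u) * ln (Gf (\<alpha>1 * (l - x)) M) + u * ln (Gf (\<alpha>2 * (l - x)) M)"
      if "0 < u" "u < 1" for \<alpha>1 \<alpha>2 u l
      unfolding lin by (rule sc_ineq[OF sc]) (use that in auto)
    show "ln (Gf (((1 - u) * \<alpha>1 + u * \<alpha>2) * (0 - x)) M) \<le>
        (1 - u) * ln (Gf (\<alpha>1 * (0 - x)) M) + u * ln (Gf (\<alpha>2 * (0 - x)) M)"
      if "0 < u" "u < 1" for \<alpha>1 \<alpha>2 u
      unfolding lin by (rule sc_ineq[OF sc]) (use that in auto)
    show "ln (Gf (((1 - u) * \<alpha>1 + u * \<alpha>2) * (l - x)) M) <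
        (1 - u) * ln (Gf (\<alpha>1 * (l - x)) M) + u * ln (Gf (\<alpha>2 * (l - x)) M)"
      if "\<alpha>1 \<noteq> \<alpha>2" "0 < u" "u < 1" "l \<noteq> x" for \<alpha>1 \<alpha>2 u l
    proof -
      have "\<alpha>1 * (l - x) \<noteq> \<alpha>2 * (l - x)" using that by simp
      then show ?thesis unfolding lin using sc that unfolding strictly_convex_on_def by blast
    qed
  qed
qed

lemma ereal_ident:
  fixes B p n :: ereal and a :: real
  assumes "0 \<le> a" "B \<noteq> - \<infinity>" "0 \<le> p" "0 \<le> n" "n \<noteq> \<infinity>"
  shows "- (ereal a * (- B) + n - p) = ereal a * B + p - n"
  using assms by (cases B; cases p; cases n) (auto simp: ereal_mult_infty split: if_splits)

lemma limit_formula: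
  assumes b: "\<beta> > 0"
  shows "((\<lambda>M. ereal (psiM \<beta> x M \<alpha>)) \<longlongrightarrow> - mp_eint \<beta> (\<lambda>l. - neglog (1 + \<alpha> * (x - l)))) at_top"
proof -
  note L = psiM_limit_general[OF b, where x=x and \<alpha>=\<alpha>]
  have "- mp_eint \<beta> (\<lambda>l. - neglog (1 + \<alpha> * (x - l))) =
      ereal (mp_atom \<beta>) * neglog (1 + \<alpha> * (x - 0))
      + enn2ereal (\<integral>\<^sup>+ l. ennreal (mp_density \<beta> l) * e2ennreal (max (neglog (1 + \<alpha> * (x - l))) 0) \<partial>lborel)
      - enn2ereal (\<integral>\<^sup>+ l. ennreal (mp_density \<beta> l) * e2ennreal (max (- neglog (1 + \<alpha> * (x - l))) 0) \<partial>lborel)"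
    unfolding mp_eint_def ereal_uminus_uminus
    by (rule ereal_ident) (use L(2) mp_atom_nonneg neglog_not_minf in \<open>auto simp: enn2ereal_nonneg\<close>)
  with L(1) show ?thesis by simp
qed

lemma P_inf:
  assumes b: "\<beta> > 0" and pq: "p < q" "lam_minus \<beta> \<le> p" "q \<le> lam_plus \<beta>"
    and hinf: "\<And>l. p < l \<Longrightarrow> l < q \<Longrightarrow> h l = \<infinity>"
  shows "(\<integral>\<^sup>+ l. ennreal (mp_density \<beta> l) * e2ennreal (max (h l) 0) \<partial>lborel) = \<infinity>"
proof -
  have "(\<integral>\<^sup>+ l. \<infinity> * indicator {p<..<q} l \<partial>lborel) \<le>
      (\<integral>\<^sup>+ l. ennreal (mp_density \<beta> l) * e2ennreal (max (h l) 0) \<partial>lborel)"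
  proof (intro nn_integral_mono)
    fix l
    show "\<infinity> * indicator {p<..<q} l \<le> ennreal (mp_density \<beta> l) * e2ennreal (max (h l) 0)"
    proof (cases "l \<in> {p<..<q}")
      case True
      then have "mp_density \<beta> l > 0" using pq by (intro dens_pos[OF b]) auto
      moreover have "h l = \<infinity>" using True hinf by auto
      ultimately show ?thesis by (simp add: ennreal_mult_top)
    next
      case False then show ?thesis by simp
    qed
  qed
  moreover have "(\<integral>\<^sup>+ l. \<infinity> * indicator {p<..<q} l \<partial>lborel) = \<infinity>"
    using pq by (subst nn_integral_cmult_indicator) (auto simp: ennreal_top_mult)
  ultimately show ?thesis by (simp add: top_unique)
qed

lemma limit_outside:
  assumes b: "\<beta> > 0" and x1: "lam_t_minus \<beta> < x" and x2: "x < lam_plus \<beta>"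
    and \<alpha>: "\<alpha> \<notin> {- 1 / (x - lam_t_minus \<beta>) .. 1 / (lam_plus \<beta> - x)}"
  shows "((\<lambda>M. ereal (psiM \<beta> x M \<alpha>)) \<longlongrightarrow> \<infinity>) at_top"
proof -
  note L = psiM_limit_general[OF b, where x=x and \<alpha>=\<alpha>]
  note lf = lam_facts[OF b]
  define A where "A = ereal (mp_atom \<beta>) * neglog (1 + \<alpha> * (x - 0))"
  define P where "P = (\<integral>\<^sup>+ l. ennreal (mp_density \<beta> l) * e2ennreal (max (neglog (1 + \<alpha> * (x - l))) 0) \<partial>lborel)"
  define N where "N = (\<integral>\<^sup>+ l. ennreal (mp_density \<beta> l) * e2ennreal (max (- neglog (1 + \<alpha> * (x - l))) 0) \<partial>lborel)"
  have Nfin: "N \<noteq> \<infinity>" using L(2) unfolding N_def .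
  have Anm: "A \<noteq> - \<infinity>" unfolding A_def
    using neglog_not_minf[of "1 + \<alpha> * (x - 0)"] mp_atom_nonneg[of \<beta>]
    by (cases "neglog (1 + \<alpha> * (x - 0))") (auto simp: ereal_mult_infty)
  have xt: "x - lam_t_minus \<beta> > 0" and bx: "lam_plus \<beta> - x > 0" using x1 x2 by auto
  have claim: "A = \<infinity> \<or> P = \<infinity>"
  proof (cases "\<alpha> > 1 / (lam_plus \<beta> - x)")
    case True
    have a0: "\<alpha> > 0" using True bx by (meson less_trans zero_less_divide_1_iff)
    have "1 < \<alpha> * (lam_plus \<beta> - x)" using True bx by (simp add: field_simps)
    then have q: "x + 1 / \<alpha> < lam_plus \<beta>" using a0 by (simp add: field_simps)
    have "P = \<infinity>" unfolding P_def
    proof (rule P_inf[OF b])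
      show "max (lam_minus \<beta>) (x + 1 / \<alpha>) < lam_plus \<beta>" using q lf by simp
      show "lam_minus \<beta> \<le> max (lam_minus \<beta>) (x + 1 / \<alpha>)" by simp
      fix l assume l: "max (lam_minus \<beta>) (x + 1 / \<alpha>) < l"
      then have "x + 1 / \<alpha> < l" by simp
      then have "1 < \<alpha> * (l - x)" using a0 by (simp add: field_simps)
      then have "1 + \<alpha> * (x - l) < 0" by (simp add: algebra_simps)
      then show "neglog (1 + \<alpha> * (x - l)) = \<infinity>" unfolding neglog_def by simp
    qed simp
    then show ?thesis by simp
  next
    case False
    then have lt: "\<alpha> < - 1 / (x - lam_t_minus \<beta>)" using \<alpha> by auto
    have a0: "\<alpha> < 0" using lt xt by (smt (verit) divide_neg_pos)
    have "\<alpha> * (x - lam_t_minus \<beta>) < -1" using lt xt by (simp add: field_simps)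
    then have tq: "lam_t_minus \<beta> < x + 1 / \<alpha>" using a0 by (simp add: field_simps)
    have inf: "neglog (1 + \<alpha> * (x - l)) = \<infinity>" if "l < x + 1 / \<alpha>" for l
    proof -
      have "x - l > - 1 / \<alpha>" using that by simp
      then have "\<alpha> * (x - l) < -1" using a0 by (simp add: field_simps)
      then show ?thesis unfolding neglog_def by simp
    qed
    show ?thesis
    proof (cases "\<beta> > 1")
      case True
      then have "lam_t_minus \<beta> = 0" unfolding lam_t_minus_def by simp
      then have "neglog (1 + \<alpha> * (x - 0)) = \<infinity>" using inf[of 0] tq by simp
      moreover have "mp_atom \<beta> > 0" using mp_atom_pos[OF b] True by simp
      ultimately show ?thesis unfolding A_def by simp
    next
      case False
      then have t: "lam_t_minus \<beta> = lam_minus \<beta>" by (intro lam_t_minus_le1) simp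
      have "P = \<infinity>" unfolding P_def
      proof (rule P_inf[OF b])
        show "lam_minus \<beta> < min (lam_plus \<beta>) (x + 1 / \<alpha>)" using lf tq t by simp
        fix l assume "l < min (lam_plus \<beta>) (x + 1 / \<alpha>)"
        then show "neglog (1 + \<alpha> * (x - l)) = \<infinity>" using inf by simp
      qed auto
      then show ?thesis by simp
    qed
  qed
  have "A + enn2ereal P - enn2ereal N = \<infinity>"
  proof -
    have Nf: "enn2ereal N \<noteq> \<infinity>" "enn2ereal N \<noteq> - \<infinity>" using enn2ereal_fin[OF Nfin]
      by auto
    have h1: "A + enn2ereal P = \<infinity>"
    proof (cases "A = \<infinity>")
      case True
      have "enn2ereal P \<noteq> - \<infinity>" using enn2ereal_nonneg[of P] by auto
      then show ?thesis using True by simp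
    next
      case False
      then have "P = \<infinity>" using claim by simp
      then show ?thesis using Anm by simp
    qed
    have h2: "(\<infinity>::ereal) - enn2ereal N = \<infinity>" using Nf by (cases "enn2ereal N") auto
    show ?thesis by (subst h1) (rule h2)
  qed
  with L(1) show ?thesis unfolding A_def P_def N_def by simp
qed

lemma e2_max: "e2ennreal (max (ereal r) 0) = ennreal r"
  by (cases "r \<le> 0") (auto simp: max_def e2ennreal_neg ennreal_neg e2ennreal_ereal)

lemma e2_max_neg: "e2ennreal (max (- ereal r) 0) = ennreal (- r)"
  using e2_max[of "- r"] by simp

lemma ennreal_max0: "ennreal (max r 0) = ennreal r"
  by (cases "r \<le> 0") (auto simp: max_def ennreal_neg)

lemma dens_int_cont_on:
  assumes b: "\<beta> > 0" and fm: "f \<in> borel_measurable borel"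
    and fc: "continuous_on {lam_minus \<beta>..lam_plus \<beta>} f"
  shows "integrable lborel (\<lambda>l. mp_density \<beta> l * f l)"
proof -
  have "compact (f ` {lam_minus \<beta>..lam_plus \<beta>})"
    by (intro compact_continuous_image fc) auto
  then obtain B where "\<forall>y \<in> f ` {lam_minus \<beta>..lam_plus \<beta>}. norm y \<le> B"
    using compact_imp_bounded bounded_iff by metis
  then have B: "\<And>l. l \<in> {lam_minus \<beta>..lam_plus \<beta>} \<Longrightarrow> \<bar>f l\<bar> \<le> B" by auto
  show ?thesis by (rule dens_int_bounded[OF b fm B])
qed

lemma pos_in_I:
  assumes b: "\<beta> > 0" and x1: "lam_t_minus \<beta> < x" and x2: "x < lam_plus \<beta>"
    and \<alpha>: "\<alpha> \<in> {- 1 / (x - lam_t_minus \<beta>) <..< 1 / (lam_plus \<beta> - x)}"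
    and l: "lam_t_minus \<beta> \<le> l" "l \<le> lam_plus \<beta>"
  shows "1 + \<alpha> * (x - l) > 0"
proof -
  have xt: "x - lam_t_minus \<beta> > 0" and bx: "lam_plus \<beta> - x > 0" using x1 x2 by auto
  show ?thesis
  proof (cases "\<alpha> \<ge> 0")
    case True
    have "\<alpha> < 1 / (lam_plus \<beta> - x)" using \<alpha> by simp
    then have "\<alpha> * (lam_plus \<beta> - x) < 1" using bx by (simp add: field_simps)
    moreover have "\<alpha> * (l - x) \<le> \<alpha> * (lam_plus \<beta> - x)" using True l by (intro mult_left_mono) auto
    ultimately show ?thesis by (simp add: algebra_simps)
  next
    case False
    have "- 1 / (x - lam_t_minus \<beta>) < \<alpha>" using \<alpha> by simp
    then have "-1 < \<alpha> * (x - lam_t_minus \<beta>)" using xt by (simp add: field_simps)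
    moreover have "\<alpha> * (x - lam_t_minus \<beta>) \<le> \<alpha> * (x - l)" using False l by (intro mult_left_mono_neg) auto
    ultimately show ?thesis by simp
  qed
qed

lemma psi_value:
  assumes b: "\<beta> > 0" and x1: "lam_t_minus \<beta> < x" and x2: "x < lam_plus \<beta>"
    and \<alpha>: "\<alpha> \<in> {- 1 / (x - lam_t_minus \<beta>) <..< 1 / (lam_plus \<beta> - x)}"
  shows "psi \<beta> x \<alpha> = mp_int \<beta> (\<lambda>l. - ln (1 + \<alpha> * (x - l)))"
proof -
  note L = psiM_limit_general[OF b, where x=x and \<alpha>=\<alpha>]
  note lf = lam_facts[OF b]
  define k where "k l = - ln (1 + \<alpha> * (x - l))" for l
  have pos: "1 + \<alpha> * (x - l) > 0" if "lam_minus \<beta> \<le> l" "l \<le> lam_plus \<beta>" for l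
    by (rule pos_in_I[OF b x1 x2 \<alpha>]) (use that lf in auto)
  have kcont: "continuous_on {lam_minus \<beta>..lam_plus \<beta>} k"
  proof -
    have nz: "1 + \<alpha> * (x - l) \<noteq> 0" if "l \<in> {lam_minus \<beta>..lam_plus \<beta>}" for l
      using pos[of l] that by force
    show ?thesis unfolding k_def by (intro continuous_intros) (use nz in auto)
  qed
  have km[measurable]: "k \<in> borel_measurable borel" unfolding k_def[abs_def] by measurable
  have dn: "0 \<le> mp_density \<beta> l" for l by (rule dens_nonneg[OF b])
  have hk: "neglog (1 + \<alpha> * (x - l)) = ereal (k l)" if "lam_minus \<beta> \<le> l" "l \<le> lam_plus \<beta>" for l
    using pos[OF that] unfolding neglog_def k_def by simp
  have i1: "integrable lborel (\<lambda>l. mp_density \<beta> l * max (k l) 0)"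
    by (rule dens_int_cont_on[OF b]) (auto intro!: continuous_intros kcont)
  have i2: "integrable lborel (\<lambda>l. mp_density \<beta> l * max (- k l) 0)"
    by (rule dens_int_cont_on[OF b]) (auto intro!: continuous_intros kcont)
  have i3: "integrable lborel (\<lambda>l. mp_density \<beta> l * k l)"
    by (rule dens_int_cont_on[OF b km kcont])
  have P: "(\<integral>\<^sup>+ l. ennreal (mp_density \<beta> l) * e2ennreal (max (neglog (1 + \<alpha> * (x - l))) 0) \<partial>lborel)
      = ennreal (\<integral>l. mp_density \<beta> l * max (k l) 0 \<partial>lborel)"
  proof -
    have "(\<integral>\<^sup>+ l. ennreal (mp_density \<beta> l) * e2ennreal (max (neglog (1 + \<alpha> * (x - l))) 0) \<partial>lborel)
        = (\<integral>\<^sup>+ l. ennreal (mp_density \<beta> l * max (k l) 0) \<partial>lborel)"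
    proof (rule nn_integral_cong)
      fix l :: real
      show "ennreal (mp_density \<beta> l) * e2ennreal (max (neglog (1 + \<alpha> * (x - l))) 0) = ennreal (mp_density \<beta> l * max (k l) 0)"
      proof (cases "l \<in> {lam_minus \<beta>..lam_plus \<beta>}")
        case True
        have "neglog (1 + \<alpha> * (x - l)) = ereal (k l)" using hk True by simp
        then show ?thesis using dn[of l] by (simp add: e2_max ennreal_mult' ennreal_max0)
      next
        case False then show ?thesis using dens_zero[OF b, of l] by auto
      qed
    qed
    also have "... = ennreal (\<integral>l. mp_density \<beta> l * max (k l) 0 \<partial>lborel)"
      by (rule nn_integral_eq_integral[OF i1]) (use dn in auto)
    finally show ?thesis .
  qed
  have N: "(\<integral>\<^sup>+ l. ennreal (mp_density \<beta> l) * e2ennreal (max (- neglog (1 + \<alpha> * (x - l))) 0) \<partial>lborel)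
      = ennreal (\<integral>l. mp_density \<beta> l * max (- k l) 0 \<partial>lborel)"
  proof -
    have "(\<integral>\<^sup>+ l. ennreal (mp_density \<beta> l) * e2ennreal (max (- neglog (1 + \<alpha> * (x - l))) 0) \<partial>lborel)
        = (\<integral>\<^sup>+ l. ennreal (mp_density \<beta> l * max (- k l) 0) \<partial>lborel)"
    proof (rule nn_integral_cong)
      fix l :: real
      show "ennreal (mp_density \<beta> l) * e2ennreal (max (- neglog (1 + \<alpha> * (x - l))) 0) = ennreal (mp_density \<beta> l * max (- k l) 0)"
      proof (cases "l \<in> {lam_minus \<beta>..lam_plus \<beta>}")
        case True
        have "neglog (1 + \<alpha> * (x - l)) = ereal (k l)" using hk True by simp
        then show ?thesis using dn[of l] by (simp only: e2_max_neg ennreal_mult'[OF dn] ennreal_max0)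
      next
        case False then show ?thesis using dens_zero[OF b, of l] by auto
      qed
    qed
    also have "... = ennreal (\<integral>l. mp_density \<beta> l * max (- k l) 0 \<partial>lborel)"
      by (rule nn_integral_eq_integral[OF i2]) (use dn in auto)
    finally show ?thesis .
  qed
  have A: "ereal (mp_atom \<beta>) * neglog (1 + \<alpha> * (x - 0)) = ereal (mp_atom \<beta> * k 0)"
  proof (cases "mp_atom \<beta> > 0")
    case True
    then have "lam_t_minus \<beta> = 0" using mp_atom_pos[OF b] unfolding lam_t_minus_def by simp
    then have "1 + \<alpha> * (x - 0) > 0" by (intro pos_in_I[OF b x1 x2 \<alpha>]) (use lf in auto)
    then show ?thesis unfolding neglog_def k_def by simp
  next
    case False
    then have "mp_atom \<beta> = 0" using mp_atom_nonneg[of \<beta>] by simp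
    then show ?thesis by (simp add: zero_ereal_def[symmetric])
  qed
  have I1: "(\<integral>l. mp_density \<beta> l * max (k l) 0 \<partial>lborel) \<ge> 0" by (intro integral_nonneg_AE AE_I2) (use dn in auto)
  have I2: "(\<integral>l. mp_density \<beta> l * max (- k l) 0 \<partial>lborel) \<ge> 0" by (intro integral_nonneg_AE AE_I2) (use dn in auto)
  have diff: "(\<integral>l. mp_density \<beta> l * max (k l) 0 \<partial>lborel) - (\<integral>l. mp_density \<beta> l * max (- k l) 0 \<partial>lborel)
      = (\<integral>l. mp_density \<beta> l * k l \<partial>lborel)"
  proof -
    have "(\<integral>l. mp_density \<beta> l * max (k l) 0 \<partial>lborel) - (\<integral>l. mp_density \<beta> l * max (- k l) 0 \<partial>lborel)
       = (\<integral>l. mp_density \<beta> l * max (k l) 0 - mp_density \<beta> l * max (- k l) 0 \<partial>lborel)"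
      using i1 i2 by simp
    also have "... = (\<integral>l. mp_density \<beta> l * k l \<partial>lborel)"
      by (rule Bochner_Integration.integral_cong[OF refl]) (simp add: max_def algebra_simps)
    finally show ?thesis .
  qed
  have "((\<lambda>M. ereal (psiM \<beta> x M \<alpha>)) \<longlongrightarrow> ereal (mp_int \<beta> k)) at_top"
  proof -
    have "ereal (mp_atom \<beta>) * neglog (1 + \<alpha> * (x - 0))
      + enn2ereal (\<integral>\<^sup>+ l. ennreal (mp_density \<beta> l) * e2ennreal (max (neglog (1 + \<alpha> * (x - l))) 0) \<partial>lborel)
      - enn2ereal (\<integral>\<^sup>+ l. ennreal (mp_density \<beta> l) * e2ennreal (max (- neglog (1 + \<alpha> * (x - l))) 0) \<partial>lborel)
      = ereal (mp_int \<beta> k)"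
      unfolding A P N mp_int_def using I1 I2 diff[symmetric] by (simp add: enn2ereal_ennreal)
    with L(1) show ?thesis by simp
  qed
  then have "((\<lambda>M. psiM \<beta> x M \<alpha>) \<longlongrightarrow> mp_int \<beta> k) at_top" by simp
  then have "psi \<beta> x \<alpha> = mp_int \<beta> k" unfolding psi_def by (intro tendsto_Lim) simp_all
  then show ?thesis unfolding k_def .
qed

lemma psi_strict:
  assumes b: "\<beta> > 0" and x1: "lam_t_minus \<beta> < x" and x2: "x < lam_plus \<beta>"
  shows "strictly_convex_on {- 1 / (x - lam_t_minus \<beta>) <..< 1 / (lam_plus \<beta> - x)} (psi \<beta> x)"
proof (rule sc_cong)
  let ?I = "{- 1 / (x - lam_t_minus \<beta>) <..< 1 / (lam_plus \<beta> - x)}"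
  note lf = lam_facts[OF b]
  show "psi \<beta> x \<alpha> = mp_int \<beta> (\<lambda>l. - ln (1 + \<alpha> * (x - l)))" if "\<alpha> \<in> ?I" for \<alpha>
    by (rule psi_value[OF b x1 x2 that])
  have lin: "1 + ((1 - u) * \<alpha>1 + u * \<alpha>2) * (x - l) = (1 - u) * (1 + \<alpha>1 * (x - l)) + u * (1 + \<alpha>2 * (x - l))"
    for u \<alpha>1 \<alpha>2 l :: real by (simp add: algebra_simps)
  note sc = neg_ln_strict_convex
  show "strictly_convex_on ?I (\<lambda>\<alpha>. mp_int \<beta> (\<lambda>l. - ln (1 + \<alpha> * (x - l))))"
  proof (rule mp_int_strict_convex[OF b x2])
    show "convex ?I" by simp
    show "integrable lborel (\<lambda>l. mp_density \<beta> l * - ln (1 + \<alpha> * (x - l)))" if "\<alpha> \<in> ?I" for \<alpha>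
    proof (rule dens_int_cont_on[OF b])
      show "(\<lambda>l. - ln (1 + \<alpha> * (x - l))) \<in> borel_measurable borel" by measurable
      have p: "1 + \<alpha> * (x - l) > 0" if "l \<in> {lam_minus \<beta>..lam_plus \<beta>}" for l
        by (rule pos_in_I[OF b x1 x2 \<open>\<alpha> \<in> ?I\<close>]) (use that lf in auto)
      have nz: "1 + \<alpha> * (x - l) \<noteq> 0" if "l \<in> {lam_minus \<beta>..lam_plus \<beta>}" for l
        using p[OF that] by simp
      show "continuous_on {lam_minus \<beta>..lam_plus \<beta>} (\<lambda>l. - ln (1 + \<alpha> * (x - l)))"
        by (intro continuous_intros) (use nz in auto)
    qed
    show "- ln (1 + ((1 - u) * \<alpha>1 + u * \<alpha>2) * (x - l)) \<le>
        (1 - u) * - ln (1 + \<alpha>1 * (x - l)) + u * - ln (1 + \<alpha>2 * (x - l))"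
      if "\<alpha>1 \<in> ?I" "\<alpha>2 \<in> ?I" "0 < u" "u < 1" "l \<in> {lam_minus \<beta>..lam_plus \<beta>}" for \<alpha>1 \<alpha>2 u l
      unfolding lin
      by (rule sc_ineq[OF sc]) (use that pos_in_I[OF b x1 x2] lf in auto)
    show "- ln (1 + ((1 - u) * \<alpha>1 + u * \<alpha>2) * (x - 0)) \<le>
        (1 - u) * - ln (1 + \<alpha>1 * (x - 0)) + u * - ln (1 + \<alpha>2 * (x - 0))"
      if "\<alpha>1 \<in> ?I" "\<alpha>2 \<in> ?I" "0 < u" "u < 1" "mp_atom \<beta> > 0" for \<alpha>1 \<alpha>2 u
    proof -
      have t: "lam_t_minus \<beta> = 0" using that(5) mp_atom_pos[OF b] unfolding lam_t_minus_def by simp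
      have p1: "1 + \<alpha>1 * (x - 0) > 0" by (rule pos_in_I[OF b x1 x2 that(1)]) (use t lf in auto)
      have p2: "1 + \<alpha>2 * (x - 0) > 0" by (rule pos_in_I[OF b x1 x2 that(2)]) (use t lf in auto)
      show ?thesis unfolding lin
        by (rule sc_ineq[OF sc]) (use that p1 p2 in auto)
    qed
    show "- ln (1 + ((1 - u) * \<alpha>1 + u * \<alpha>2) * (x - l)) <
        (1 - u) * - ln (1 + \<alpha>1 * (x - l)) + u * - ln (1 + \<alpha>2 * (x - l))"
      if "\<alpha>1 \<in> ?I" "\<alpha>2 \<in> ?I" "\<alpha>1 \<noteq> \<alpha>2" "0 < u" "u < 1" "lam_minus \<beta> < l" "l < lam_plus \<beta>" "l \<noteq> x"
      for \<alpha>1 \<alpha>2 u l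
    proof -
      have p1: "1 + \<alpha>1 * (x - l) \<in> {0<..}" "1 + \<alpha>2 * (x - l) \<in> {0<..}"
        using pos_in_I[OF b x1 x2 that(1), of l] pos_in_I[OF b x1 x2 that(2), of l] that lf by auto
      have ne: "1 + \<alpha>1 * (x - l) \<noteq> 1 + \<alpha>2 * (x - l)" using that by simp
      show ?thesis unfolding lin using sc p1 ne that(4,5) unfolding strictly_convex_on_def by blast
    qed
  qed
qed

lemma lx_bound:
  assumes b: "\<beta> > 0" and l: "l \<in> {lam_minus \<beta>..lam_plus \<beta>}"
  shows "\<bar>l - x\<bar> \<le> lam_plus \<beta> + \<bar>x\<bar>"
  using l lam_facts(3)[OF b] by auto

lemma mGcomp_cont: assumes "0 < M" shows "continuous_on UNIV (\<lambda>l. (l - x) * mG (\<alpha> * (l - x)) M)"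
proof -
  have "continuous_on UNIV (\<lambda>l. mG (\<alpha> * (l - x)) M)"
    by (rule continuous_on_compose2[OF mG_cont[OF assms], of _ "\<lambda>l. \<alpha> * (l - x)"]) (auto intro!: continuous_intros)
  then show ?thesis by (intro continuous_intros)
qed

lemma mGcomp_cont_alpha: assumes "0 < M" shows "continuous_on UNIV (\<lambda>\<alpha>. (l - x) * mG (\<alpha> * (l - x)) M)"
proof -
  have "continuous_on UNIV (\<lambda>\<alpha>. mG (\<alpha> * (l - x)) M)"
    by (rule continuous_on_compose2[OF mG_cont[OF assms], of _ "\<lambda>\<alpha>. \<alpha> * (l - x)"]) (auto intro!: continuous_intros)
  then show ?thesis by (intro continuous_intros)
qed

lemma mGcomp_bound:
  assumes b: "\<beta> > 0" and M: "0 < M" and l: "l \<in> {lam_minus \<beta>..lam_plus \<beta>}"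
  shows "\<bar>(l - x) * mG c M\<bar> \<le> (lam_plus \<beta> + \<bar>x\<bar>) * M"
proof -
  have "\<bar>(l - x) * mG c M\<bar> = \<bar>l - x\<bar> * mG c M" using mG_bounds[OF M, of c] by (simp add: abs_mult)
  also have "... \<le> (lam_plus \<beta> + \<bar>x\<bar>) * M"
    using lx_bound[OF b l, of x] mG_bounds[OF M, of c] by (intro mult_mono) auto
  finally show ?thesis .
qed

lemma psiM_deriv:
  assumes b: "\<beta> > 0" and M: "0 < M"
  shows "(psiM \<beta> x M has_real_derivative mp_int \<beta> (\<lambda>l. (l - x) * mG (\<alpha> * (l - x)) M)) (at \<alpha>)"
proof -
  have e: "psiM \<beta> x M = (\<lambda>\<alpha>. mp_int \<beta> (\<lambda>l. ln (Gf (\<alpha> * (l - x)) M)))"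
    by (rule ext) (rule psiM_eq)
  show ?thesis unfolding e
  proof (rule mp_int_deriv[OF b, where C = "M * (lam_plus \<beta> + \<bar>x\<bar>)"])
    show "(\<lambda>l. ln (Gf (\<alpha> * (l - x)) M)) \<in> borel_measurable borel" for \<alpha> by (rule lnGf_comp_meas[OF M])
    show "(\<lambda>l. (l - x) * mG (\<alpha> * (l - x)) M) \<in> borel_measurable borel" for \<alpha>
      by (rule borel_measurable_continuous_onI[OF mGcomp_cont[OF M]])
    show "((\<lambda>\<alpha>. ln (Gf (\<alpha> * (l - x)) M)) has_real_derivative (l - x) * mG (\<alpha> * (l - x)) M) (at \<alpha>)" for \<alpha> l
    proof -
      have d: "((\<lambda>\<alpha>. \<alpha> * (l - x)) has_real_derivative (l - x)) (at \<alpha>)"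
        by (auto intro!: derivative_eq_intros)
      show ?thesis using DERIV_chain2[OF lnGf_deriv[OF M] d] by (simp add: mult.commute)
    qed
    show "\<bar>ln (Gf (\<alpha>1 * (l - x)) M) - ln (Gf (\<alpha>2 * (l - x)) M)\<bar> \<le> M * (lam_plus \<beta> + \<bar>x\<bar>) * \<bar>\<alpha>1 - \<alpha>2\<bar>"
      if l: "l \<in> {lam_minus \<beta>..lam_plus \<beta>}" for \<alpha>1 \<alpha>2 l
    proof -
      have "\<bar>ln (Gf (\<alpha>1 * (l - x)) M) - ln (Gf (\<alpha>2 * (l - x)) M)\<bar> \<le> M * \<bar>\<alpha>1 * (l - x) - \<alpha>2 * (l - x)\<bar>"
        by (rule lnGf_lip[OF M])
      also have "\<bar>\<alpha>1 * (l - x) - \<alpha>2 * (l - x)\<bar> = \<bar>l - x\<bar> * \<bar>\<alpha>1 - \<alpha>2\<bar>"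
        by (simp add: left_diff_distrib[symmetric] abs_mult)
      also have "M * (\<bar>l - x\<bar> * \<bar>\<alpha>1 - \<alpha>2\<bar>) \<le> M * ((lam_plus \<beta> + \<bar>x\<bar>) * \<bar>\<alpha>1 - \<alpha>2\<bar>)"
        using lx_bound[OF b l, of x] M by (intro mult_left_mono mult_right_mono) auto
      finally show ?thesis by (simp add: mult.assoc)
    qed
    show "integrable lborel (\<lambda>l. mp_density \<beta> l * ln (Gf (\<alpha> * (l - x)) M))" for \<alpha>
      by (rule dens_int_cont[OF b lnGf_comp_cont[OF M]])
  qed
qed

lemma D_cont:
  assumes b: "\<beta> > 0" and M: "0 < M"
  shows "continuous_on UNIV (\<lambda>\<alpha>. mp_int \<beta> (\<lambda>l. (l - x) * mG (\<alpha> * (l - x)) M))"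
proof (rule mp_int_cont[OF b, where C = "(lam_plus \<beta> + \<bar>x\<bar>) * M"])
  show "(\<lambda>l. (l - x) * mG (\<alpha> * (l - x)) M) \<in> borel_measurable borel" for \<alpha>
    by (rule borel_measurable_continuous_onI[OF mGcomp_cont[OF M]])
  show "continuous_on UNIV (\<lambda>\<alpha>. (l - x) * mG (\<alpha> * (l - x)) M)" for l by (rule mGcomp_cont_alpha[OF M])
  show "\<bar>(l - x) * mG (\<alpha> * (l - x)) M\<bar> \<le> (lam_plus \<beta> + \<bar>x\<bar>) * M" if "l \<in> {lam_minus \<beta>..lam_plus \<beta>}" for \<alpha> l
    by (rule mGcomp_bound[OF b M that])
qed

lemma mp_int_cmult:
  assumes b: "\<beta> > 0" shows "mp_int \<beta> (\<lambda>l. c * f l) = c * mp_int \<beta> f"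
proof -
  have "(\<integral>l. mp_density \<beta> l * (c * f l) \<partial>lborel) = (\<integral>l. c * (mp_density \<beta> l * f l) \<partial>lborel)"
    by (simp add: algebra_simps)
  also have "... = c * (\<integral>l. mp_density \<beta> l * f l \<partial>lborel)" by simp
  finally show ?thesis unfolding mp_int_def by (simp add: algebra_simps)
qed

lemma D_zero:
  assumes b: "\<beta> > 0"
  shows "mp_int \<beta> (\<lambda>l. (l - x) * mG (0 * (l - x)) M) = mG 0 M * (lam_bar \<beta> - x)"
proof -
  have i1: "integrable lborel (\<lambda>l. mp_density \<beta> l * l)"
    by (rule dens_int_cont[OF b]) (intro continuous_intros)
  have i2: "integrable lborel (\<lambda>l. mp_density \<beta> l)" by (rule dens_integrable[OF b])
  have "mp_int \<beta> (\<lambda>l. (l - x) * mG (0 * (l - x)) M) = mG 0 M * mp_int \<beta> (\<lambda>l. l - x)"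
    using mp_int_cmult[OF b, of "mG 0 M" "\<lambda>l. l - x"] by (simp add: mult.commute)
  also have "mp_int \<beta> (\<lambda>l. l - x) = lam_bar \<beta> - x * (mp_atom \<beta> + (\<integral>l. mp_density \<beta> l \<partial>lborel))"
  proof -
    have "(\<integral>l. mp_density \<beta> l * (l - x) \<partial>lborel) = (\<integral>l. mp_density \<beta> l * l - x * mp_density \<beta> l \<partial>lborel)"
      by (simp add: algebra_simps)
    also have "... = (\<integral>l. mp_density \<beta> l * l \<partial>lborel) - x * (\<integral>l. mp_density \<beta> l \<partial>lborel)"
      using i1 i2 by simp
    finally show ?thesis unfolding mp_int_def lam_bar_def by (simp add: algebra_simps)
  qed
  also have "... = lam_bar \<beta> - x" using mp_mass[OF b] by simp
  finally show ?thesis .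
qed

lemma pw_lim_top:
  assumes M: "0 < M"
  shows "((\<lambda>s. (l - x) * mG (s * (l - x)) M) \<longlongrightarrow> M * max (l - x) 0) at_top"
proof -
  consider "l > x" | "l < x" | "l = x" by linarith
  then show ?thesis
  proof cases
    case 1
    have "filterlim (\<lambda>s. (l - x) * s) at_top at_top"
      using 1 by (intro filterlim_tendsto_pos_mult_at_top[OF tendsto_const] filterlim_ident) auto
    then have "filterlim (\<lambda>s. s * (l - x)) at_top at_top" by (simp add: mult.commute)
    from filterlim_compose[OF mG_lim_top[OF M] this]
    have "((\<lambda>s. (l - x) * mG (s * (l - x)) M) \<longlongrightarrow> (l - x) * M) at_top" by (intro tendsto_mult tendsto_const)
    then show ?thesis using 1 by (simp add: mult.commute)
  next
    case 2
    have "filterlim (\<lambda>s. (l - x) * s) at_bot at_top"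
      using 2 by (intro filterlim_tendsto_neg_mult_at_bot[OF tendsto_const] filterlim_ident) auto
    then have "filterlim (\<lambda>s. s * (l - x)) at_bot at_top" by (simp add: mult.commute)
    from filterlim_compose[OF mG_lim_bot[OF M] this]
    have "((\<lambda>s. (l - x) * mG (s * (l - x)) M) \<longlongrightarrow> (l - x) * 0) at_top" by (intro tendsto_mult tendsto_const)
    then show ?thesis using 2 by simp
  next
    case 3 then show ?thesis by simp
  qed
qed

lemma pw_lim_bot:
  assumes M: "0 < M"
  shows "((\<lambda>s. (l - x) * mG ((- s) * (l - x)) M) \<longlongrightarrow> - (M * max (x - l) 0)) at_top"
proof -
  have "((\<lambda>s. (l - x) * mG (s * (x - l)) M) \<longlongrightarrow> - (M * max (x - l) 0)) at_top"
  proof -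
    have "((\<lambda>s. (x - l) * mG (s * (x - l)) M) \<longlongrightarrow> M * max (x - l) 0) at_top"
      by (rule pw_lim_top[OF M])
    then have "((\<lambda>s. - ((x - l) * mG (s * (x - l)) M)) \<longlongrightarrow> - (M * max (x - l) 0)) at_top"
      by (rule tendsto_minus)
    then show ?thesis by (simp add: algebra_simps)
  qed
  moreover have "(- s) * (l - x) = s * (x - l)" for s by (simp add: algebra_simps)
  ultimately show ?thesis by simp
qed

lemma D_lim_top:
  assumes b: "\<beta> > 0" and M: "0 < M"
  shows "((\<lambda>s. mp_int \<beta> (\<lambda>l. (l - x) * mG (s * (l - x)) M)) \<longlongrightarrow> M * mp_int \<beta> (\<lambda>l. max (l - x) 0)) at_top"
proof -
  have "((\<lambda>s. mp_int \<beta> (\<lambda>l. (l - x) * mG (s * (l - x)) M)) \<longlongrightarrow> mp_int \<beta> (\<lambda>l. M * max (l - x) 0)) at_top"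
  proof (rule mp_int_lim_top[OF b, where C = "(lam_plus \<beta> + \<bar>x\<bar>) * M"])
    show "(\<lambda>l. (l - x) * mG (s * (l - x)) M) \<in> borel_measurable borel" for s
      by (rule borel_measurable_continuous_onI[OF mGcomp_cont[OF M]])
    show "(\<lambda>l. M * max (l - x) 0) \<in> borel_measurable borel" by measurable
    show "((\<lambda>s. (l - x) * mG (s * (l - x)) M) \<longlongrightarrow> M * max (l - x) 0) at_top" for l
      by (rule pw_lim_top[OF M])
    show "\<bar>(l - x) * mG (s * (l - x)) M\<bar> \<le> (lam_plus \<beta> + \<bar>x\<bar>) * M" if "l \<in> {lam_minus \<beta>..lam_plus \<beta>}" for s l
      by (rule mGcomp_bound[OF b M that])
  qed
  then show ?thesis by (simp add: mp_int_cmult[OF b])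
qed

lemma D_lim_bot:
  assumes b: "\<beta> > 0" and M: "0 < M"
  shows "((\<lambda>s. mp_int \<beta> (\<lambda>l. (l - x) * mG ((- s) * (l - x)) M)) \<longlongrightarrow> - (M * mp_int \<beta> (\<lambda>l. max (x - l) 0))) at_top"
proof -
  have "((\<lambda>s. mp_int \<beta> (\<lambda>l. (l - x) * mG ((- s) * (l - x)) M)) \<longlongrightarrow> mp_int \<beta> (\<lambda>l. - (M * max (x - l) 0))) at_top"
  proof (rule mp_int_lim_top[OF b, where C = "(lam_plus \<beta> + \<bar>x\<bar>) * M"])
    show "(\<lambda>l. (l - x) * mG ((- s) * (l - x)) M) \<in> borel_measurable borel" for s
      by (rule borel_measurable_continuous_onI[OF mGcomp_cont[OF M]])
    show "(\<lambda>l. - (M * max (x - l) 0)) \<in> borel_measurable borel" by measurable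
    show "((\<lambda>s. (l - x) * mG ((- s) * (l - x)) M) \<longlongrightarrow> - (M * max (x - l) 0)) at_top" for l
      by (rule pw_lim_bot[OF M])
    show "\<bar>(l - x) * mG ((- s) * (l - x)) M\<bar> \<le> (lam_plus \<beta> + \<bar>x\<bar>) * M" if "l \<in> {lam_minus \<beta>..lam_plus \<beta>}" for s l
      by (rule mGcomp_bound[OF b M that])
  qed
  moreover have "mp_int \<beta> (\<lambda>l. - (M * max (x - l) 0)) = - (M * mp_int \<beta> (\<lambda>l. max (x - l) 0))"
    using mp_int_cmult[OF b, of "- M" "\<lambda>l. max (x - l) 0"] by simp
  ultimately show ?thesis by simp
qed

lemma Kp_pos:
  assumes b: "\<beta> > 0" and x2: "x < lam_plus \<beta>"
  shows "mp_int \<beta> (\<lambda>l. max (l - x) 0) > 0"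
proof -
  have i: "integrable lborel (\<lambda>l. mp_density \<beta> l * max (l - x) 0)"
    by (rule dens_int_cont[OF b]) (intro continuous_intros)
  have "(\<integral>l. 0 \<partial>(lborel::real measure)) < (\<integral>l. mp_density \<beta> l * max (l - x) 0 \<partial>lborel)"
  proof (rule integral_strict_lborel[where f="\<lambda>l. 0", OF integrable_zero i])
    show "max (lam_minus \<beta>) x < lam_plus \<beta>" using x2 lam_facts(4)[OF b] by simp
    show "0 \<le> mp_density \<beta> l * max (l - x) 0" for l using dens_nonneg[OF b] by simp
    show "0 < mp_density \<beta> l * max (l - x) 0" if "max (lam_minus \<beta>) x < l" "l < lam_plus \<beta>" for l
      using that dens_pos[OF b, of l] by simp
  qed
  moreover have "mp_atom \<beta> * max (0 - x) 0 \<ge> 0" using mp_atom_nonneg[of \<beta>] by simp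
  ultimately show ?thesis unfolding mp_int_def by simp
qed

lemma Km_pos:
  assumes b: "\<beta> > 0" and x1: "lam_t_minus \<beta> < x"
  shows "mp_int \<beta> (\<lambda>l. max (x - l) 0) > 0"
proof -
  have i: "integrable lborel (\<lambda>l. mp_density \<beta> l * max (x - l) 0)"
    by (rule dens_int_cont[OF b]) (intro continuous_intros)
  have I0: "(\<integral>l. mp_density \<beta> l * max (x - l) 0 \<partial>lborel) \<ge> 0"
    by (intro integral_nonneg_AE AE_I2) (use dens_nonneg[OF b] in simp)
  have x0: "x > 0" using x1 lam_facts(7)[OF b] by simp
  show ?thesis
  proof (cases "\<beta> > 1")
    case True
    then have "mp_atom \<beta> > 0" using mp_atom_pos[OF b] by simp
    then have "mp_atom \<beta> * max (x - 0) 0 > 0" using x0 by simp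
    then show ?thesis using I0 unfolding mp_int_def by simp
  next
    case False
    then have t: "lam_t_minus \<beta> = lam_minus \<beta>" by (intro lam_t_minus_le1) simp
    have "(\<integral>l. 0 \<partial>(lborel::real measure)) < (\<integral>l. mp_density \<beta> l * max (x - l) 0 \<partial>lborel)"
    proof (rule integral_strict_lborel[where f="\<lambda>l. 0", OF integrable_zero i])
      show "lam_minus \<beta> < min x (lam_plus \<beta>)" using x1 t lam_facts(4)[OF b] by simp
      show "0 \<le> mp_density \<beta> l * max (x - l) 0" for l using dens_nonneg[OF b] by simp
      show "0 < mp_density \<beta> l * max (x - l) 0" if "lam_minus \<beta> < l" "l < min x (lam_plus \<beta>)" for l
        using that dens_pos[OF b, of l] by simp
    qed
    moreover have "mp_atom \<beta> * max (x - 0) 0 \<ge> 0" using mp_atom_nonneg[of \<beta>] by simp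
    ultimately show ?thesis unfolding mp_int_def by simp
  qed
qed

lemma psiYM_deriv:
  assumes b: "\<beta> > 0" and M: "0 < M" and d: "(psiM \<beta> x M has_real_derivative t) (at \<alpha>)"
  shows "(psiYM \<beta> x M has_real_derivative t) (at \<alpha>)"
proof -
  have e: "psiYM \<beta> x M = (\<lambda>\<alpha>. psiM \<beta> x M \<alpha> - ln (Gf 0 M))"
    by (rule ext) (rule psiYM_eq[OF b M])
  show ?thesis unfolding e using DERIV_diff[OF d DERIV_const] by simp
qed

lemma part4_pos:
  assumes b: "\<beta> > 0" and x1: "lam_t_minus \<beta> < x" and x2: "x < lam_plus \<beta>" and t: "t > lam_bar \<beta> - x"
  shows "\<forall>\<^sub>F M' in at_top. \<exists>\<alpha> > 0. (psiM \<beta> x M' has_real_derivative t) (at \<alpha>) \<and>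
           (psiYM \<beta> x M' has_real_derivative t) (at \<alpha>)"
proof -
  define Kp where "Kp = mp_int \<beta> (\<lambda>l. max (l - x) 0)"
  have Kp: "Kp > 0" unfolding Kp_def by (rule Kp_pos[OF b x2])
  have ev2: "eventually (\<lambda>M'. mG 0 M' * (lam_bar \<beta> - x) < t) at_top"
  proof -
    have "((\<lambda>M'. mG 0 M' * (lam_bar \<beta> - x)) \<longlongrightarrow> 1 * (lam_bar \<beta> - x)) at_top"
      by (intro tendsto_mult mG0_lim tendsto_const)
    then show ?thesis using t by (intro order_tendstoD(2)) auto
  qed
  have ev3: "eventually (\<lambda>M'. M' > max 0 (t / Kp)) at_top" by (rule eventually_gt_at_top)
  show ?thesis using ev2 ev3
  proof eventually_elim
    fix M' assume h2: "mG 0 M' * (lam_bar \<beta> - x) < t" and h3: "max 0 (t / Kp) < M'"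
    have M': "0 < M'" using h3 by simp
    have "t / Kp < M'" using h3 by simp
    then have tM: "t < M' * Kp" using Kp by (simp add: field_simps)
    define D where "D \<alpha> = mp_int \<beta> (\<lambda>l. (l - x) * mG (\<alpha> * (l - x)) M')" for \<alpha>
    have D0: "D 0 < t" unfolding D_def using D_zero[OF b, of x M'] h2 by simp
    have "eventually (\<lambda>s. t < D s) at_top"
      using order_tendstoD(1)[OF D_lim_top[OF b M', of x] tM[unfolded Kp_def]] unfolding D_def .
    then obtain N where N: "\<And>s. s \<ge> N \<Longrightarrow> t < D s" by (auto simp: eventually_at_top_linorder)
    define s where "s = max N 1"
    have s: "t < D s" "0 \<le> s" using N unfolding s_def by auto
    have cont: "continuous_on {0..s} D" unfolding D_def
      by (rule continuous_on_subset[OF D_cont[OF b M']]) simp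
    obtain \<alpha> where \<alpha>: "0 \<le> \<alpha>" "\<alpha> \<le> s" "D \<alpha> = t"
      using IVT'[of D 0 t s, OF _ _ s(2) cont] D0 s(1) by auto
    have "\<alpha> \<noteq> 0" using \<alpha>(3) D0 by auto
    then have ap: "\<alpha> > 0" using \<alpha>(1) by simp
    have d: "(psiM \<beta> x M' has_real_derivative t) (at \<alpha>)"
      using psiM_deriv[OF b M', of x \<alpha>] \<alpha>(3) unfolding D_def by simp
    show "\<exists>\<alpha> > 0. (psiM \<beta> x M' has_real_derivative t) (at \<alpha>) \<and> (psiYM \<beta> x M' has_real_derivative t) (at \<alpha>)"
      using ap d psiYM_deriv[OF b M' d] by blast
  qed
qed

lemma part4_neg:
  assumes b: "\<beta> > 0" and x1: "lam_t_minus \<beta> < x" and x2: "x < lam_plus \<beta>" and t: "t < lam_bar \<beta> - x"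
  shows "\<forall>\<^sub>F M' in at_top. \<exists>\<alpha> < 0. (psiM \<beta> x M' has_real_derivative t) (at \<alpha>) \<and>
           (psiYM \<beta> x M' has_real_derivative t) (at \<alpha>)"
proof -
  define Km where "Km = mp_int \<beta> (\<lambda>l. max (x - l) 0)"
  have Km: "Km > 0" unfolding Km_def by (rule Km_pos[OF b x1])
  have ev2: "eventually (\<lambda>M'. t < mG 0 M' * (lam_bar \<beta> - x)) at_top"
  proof -
    have "((\<lambda>M'. mG 0 M' * (lam_bar \<beta> - x)) \<longlongrightarrow> 1 * (lam_bar \<beta> - x)) at_top"
      by (intro tendsto_mult mG0_lim tendsto_const)
    then show ?thesis using t by (intro order_tendstoD(1)) auto
  qed
  have ev3: "eventually (\<lambda>M'. M' > max 0 (- t / Km)) at_top" by (rule eventually_gt_at_top)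
  show ?thesis using ev2 ev3
  proof eventually_elim
    fix M' assume h2: "t < mG 0 M' * (lam_bar \<beta> - x)" and h3: "max 0 (- t / Km) < M'"
    have M': "0 < M'" using h3 by simp
    have "- t / Km < M'" using h3 by simp
    then have tM: "- (M' * Km) < t" using Km by (simp add: field_simps)
    define D where "D \<alpha> = mp_int \<beta> (\<lambda>l. (l - x) * mG (\<alpha> * (l - x)) M')" for \<alpha>
    have D0: "t < D 0" unfolding D_def using D_zero[OF b, of x M'] h2 by simp
    have "eventually (\<lambda>s. D (- s) < t) at_top"
      using order_tendstoD(2)[OF D_lim_bot[OF b M', of x] tM[unfolded Km_def]] unfolding D_def .
    then obtain N where N: "\<And>s. s \<ge> N \<Longrightarrow> D (- s) < t" by (auto simp: eventually_at_top_linorder)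
    define s where "s = max N 1"
    have s: "D (- s) < t" "- s \<le> 0" using N unfolding s_def by auto
    have cont: "continuous_on {- s..0} D" unfolding D_def
      by (rule continuous_on_subset[OF D_cont[OF b M']]) simp
    obtain \<alpha> where \<alpha>: "- s \<le> \<alpha>" "\<alpha> \<le> 0" "D \<alpha> = t"
      using IVT'[of D "- s" t 0, OF _ _ s(2) cont] D0 s(1) by auto
    have "\<alpha> \<noteq> 0" using \<alpha>(3) D0 by auto
    then have an: "\<alpha> < 0" using \<alpha>(2) by simp
    have d: "(psiM \<beta> x M' has_real_derivative t) (at \<alpha>)"
      using psiM_deriv[OF b M', of x \<alpha>] \<alpha>(3) unfolding D_def by simp
    show "\<exists>\<alpha> < 0. (psiM \<beta> x M' has_real_derivative t) (at \<alpha>) \<and> (psiYM \<beta> x M' has_real_derivative t) (at \<alpha>)"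
      using an d psiYM_deriv[OF b M' d] by blast
  qed
qed

theorem proposition2:
  fixes \<beta> x M :: real
  assumes "\<beta> > 0"
    and "lam_t_minus \<beta> < x" and "x < lam_plus \<beta>"
    and "M > 0"
  shows
    "(\<forall>\<alpha>::real. \<forall>K::real set. compact K \<longrightarrow>
        (\<exists>L. L-lipschitz_on K
          (\<lambda>l. ln (EY (\<lambda>y. exp (\<alpha> * (l - x) * y)) {y. \<bar>y\<bar> \<le> M}))))
   \<and> (\<forall>\<alpha>::real.
        mono_on {0<..} (\<lambda>M'. psiM \<beta> x M' \<alpha>)
      \<and> (\<alpha> \<in> {- 1 / (x - lam_t_minus \<beta>) .. 1 / (lam_plus \<beta> - x)} \<longrightarrow>
           ((\<lambda>M'. ereal (psiM \<beta> x M' \<alpha>)) \<longlongrightarrow>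
              - mp_eint \<beta> (\<lambda>l. - neglog (1 + \<alpha> * (x - l)))) at_top)
      \<and> (\<alpha> \<notin> {- 1 / (x - lam_t_minus \<beta>) .. 1 / (lam_plus \<beta> - x)} \<longrightarrow>
           ((\<lambda>M'. ereal (psiM \<beta> x M' \<alpha>)) \<longlongrightarrow> \<infinity>) at_top))
   \<and> strictly_convex_on UNIV (psiM \<beta> x M)
   \<and> strictly_convex_on UNIV (psiYM \<beta> x M)
   \<and> strictly_convex_on {- 1 / (x - lam_t_minus \<beta>) <..< 1 / (lam_plus \<beta> - x)} (psi \<beta> x)
   \<and> (\<forall>t. t < lam_bar \<beta> - x \<longrightarrow>
        (\<forall>\<^sub>F M' in at_top. \<exists>\<alpha> < 0.
           (psiM \<beta> x M' has_real_derivative t) (at \<alpha>) \<and>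
           (psiYM \<beta> x M' has_real_derivative t) (at \<alpha>)))
   \<and> (\<forall>t. t > lam_bar \<beta> - x \<longrightarrow>
        (\<forall>\<^sub>F M' in at_top. \<exists>\<alpha> > 0.
           (psiM \<beta> x M' has_real_derivative t) (at \<alpha>) \<and>
           (psiYM \<beta> x M' has_real_derivative t) (at \<alpha>)))"
proof -
  have b: "\<beta> > 0" and x1: "lam_t_minus \<beta> < x" and x2: "x < lam_plus \<beta>" and M: "0 < M"
    using assms by auto
  have P1: "\<forall>\<alpha>::real. \<forall>K::real set. compact K \<longrightarrow>
        (\<exists>L. L-lipschitz_on K (\<lambda>l. ln (EY (\<lambda>y. exp (\<alpha> * (l - x) * y)) {y. \<bar>y\<bar> \<le> M})))"
  proof (intro allI impI)
    fix \<alpha> :: real and K :: "real set"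
    have "(M * \<bar>\<alpha>\<bar>)-lipschitz_on K (\<lambda>l. ln (EY (\<lambda>y. exp (\<alpha> * (l - x) * y)) {y. \<bar>y\<bar> \<le> M}))"
    proof (rule lipschitz_onI)
      fix l1 l2 :: real
      have "\<bar>ln (Gf (\<alpha> * (l1 - x)) M) - ln (Gf (\<alpha> * (l2 - x)) M)\<bar> \<le> M * \<bar>\<alpha> * (l1 - x) - \<alpha> * (l2 - x)\<bar>"
        by (rule lnGf_lip[OF M])
      also have "\<bar>\<alpha> * (l1 - x) - \<alpha> * (l2 - x)\<bar> = \<bar>\<alpha>\<bar> * \<bar>l1 - l2\<bar>"
        by (simp add: right_diff_distrib[symmetric] abs_mult)
      finally show "dist (ln (EY (\<lambda>y. exp (\<alpha> * (l1 - x) * y)) {y. \<bar>y\<bar> \<le> M}))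
          (ln (EY (\<lambda>y. exp (\<alpha> * (l2 - x) * y)) {y. \<bar>y\<bar> \<le> M})) \<le> M * \<bar>\<alpha>\<bar> * dist l1 l2"
        unfolding EY_Gf dist_real_def by (simp add: mult.assoc)
    qed (use M in simp)
    then show "\<exists>L. L-lipschitz_on K (\<lambda>l. ln (EY (\<lambda>y. exp (\<alpha> * (l - x) * y)) {y. \<bar>y\<bar> \<le> M}))" by blast
  qed
  have P2: "\<forall>\<alpha>::real.
        mono_on {0<..} (\<lambda>M'. psiM \<beta> x M' \<alpha>)
      \<and> (\<alpha> \<in> {- 1 / (x - lam_t_minus \<beta>) .. 1 / (lam_plus \<beta> - x)} \<longrightarrow>
           ((\<lambda>M'. ereal (psiM \<beta> x M' \<alpha>)) \<longlongrightarrow>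
              - mp_eint \<beta> (\<lambda>l. - neglog (1 + \<alpha> * (x - l)))) at_top)
      \<and> (\<alpha> \<notin> {- 1 / (x - lam_t_minus \<beta>) .. 1 / (lam_plus \<beta> - x)} \<longrightarrow>
           ((\<lambda>M'. ereal (psiM \<beta> x M' \<alpha>)) \<longlongrightarrow> \<infinity>) at_top)"
  proof (intro allI conjI impI)
    fix \<alpha> :: real
    show "mono_on {0<..} (\<lambda>M'. psiM \<beta> x M' \<alpha>)"
      by (rule mono_onI) (use psiM_mono[OF b] in auto)
    show "((\<lambda>M'. ereal (psiM \<beta> x M' \<alpha>)) \<longlongrightarrow> - mp_eint \<beta> (\<lambda>l. - neglog (1 + \<alpha> * (x - l)))) at_top"
      by (rule limit_formula[OF b])
    show "((\<lambda>M'. ereal (psiM \<beta> x M' \<alpha>)) \<longlongrightarrow> \<infinity>) at_top"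
      if "\<alpha> \<notin> {- 1 / (x - lam_t_minus \<beta>) .. 1 / (lam_plus \<beta> - x)}"
      by (rule limit_outside[OF b x1 x2 that])
  qed
  have P3: "strictly_convex_on UNIV (psiM \<beta> x M)" by (rule psiM_strict[OF b x2 M])
  have P4: "strictly_convex_on UNIV (psiYM \<beta> x M)"
  proof -
    have e: "psiYM \<beta> x M = (\<lambda>\<alpha>. psiM \<beta> x M \<alpha> - ln (Gf 0 M))"
      by (rule ext) (rule psiYM_eq[OF b M])
    show ?thesis unfolding e by (rule sc_minus_const[OF P3])
  qed
  have P5: "strictly_convex_on {- 1 / (x - lam_t_minus \<beta>) <..< 1 / (lam_plus \<beta> - x)} (psi \<beta> x)"
    by (rule psi_strict[OF b x1 x2])
  have P6: "\<forall>t. t < lam_bar \<beta> - x \<longrightarrow>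
        (\<forall>\<^sub>F M' in at_top. \<exists>\<alpha> < 0.
           (psiM \<beta> x M' has_real_derivative t) (at \<alpha>) \<and>
           (psiYM \<beta> x M' has_real_derivative t) (at \<alpha>))"
    using part4_neg[OF b x1 x2] by blast
  have P7: "\<forall>t. t > lam_bar \<beta> - x \<longrightarrow>
        (\<forall>\<^sub>F M' in at_top. \<exists>\<alpha> > 0.
           (psiM \<beta> x M' has_real_derivative t) (at \<alpha>) \<and>
           (psiYM \<beta> x M' has_real_derivative t) (at \<alpha>))"
    using part4_pos[OF b x1 x2] by blast
  show ?thesis using P1 P2 P3 P4 P5 P6 P7 by blast
qed


end
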